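(* Let $P$ be a convex euclidean $p$-gon and let $f(n)$ be the complexity of the outer billiard about $P$. Then $n\prec f(n)\prec n^{p+1}$.
   Context: Outer billiard: let $X=\mathbb R^2\setminus P$. For each side of $P$ consider the ray extending that side beyond one of its endpoints (the rays $R_a$ extending side $ab$ in the direction of $a$, for consecutive vertices $a,b$ listed counterclockwise); these $p$ rays partition $X$ into regions $X_a,X_b,\dots$ indexed by the vertices, where $X_a$ consists of the points $x$ for which $a$ is the vertex such that the line through $x$ and $a$ supports $P$ with $P$ on a fixed side (the same orientation convention for all points). The outer billiard map $T:X\to X$ is the point reflection $x\mapsto 2a-x$ on $X_a$. A point $x$ is regular if none of $x,Tx,T^2x,\dots$ lies on the rays. The code of length $n$ of a regular point is the word $a_1\cdots a_n$ of vertices with $T^{i-1}x\in X_{a_i}$; $f(n)$ is the number of distinct codes of length $n$. For positive sequences, $g\prec h$ means there is a constant $C$ with $g(n)\le Ch(n)$ for all sufficiently large $n$. *)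

theory Defs
  imports "HOL-Analysis.Analysis"
begin

text \<open>Points of the plane are pairs of reals. A convex p-gon is given by its vertices
  v 0, ..., v (p-1), listed counterclockwise (indices taken mod p).\<close>

definition cross :: "real \<times> real \<Rightarrow> real \<times> real \<Rightarrow> real" where
  "cross u w = fst u * snd w - snd u * fst w"

definition convex_polygon :: "nat \<Rightarrow> (nat \<Rightarrow> real \<times> real) \<Rightarrow> bool" where
  "convex_polygon p v \<longleftrightarrow> p \<ge> 3 \<and>
     (\<forall>i<p. \<forall>j<p. j \<noteq> i \<and> j \<noteq> Suc i mod p \<longrightarrow>
        cross (v (Suc i mod p) - v i) (v j - v i) > 0)"

definition polygon :: "nat \<Rightarrow> (nat \<Rightarrow> real \<times> real) \<Rightarrow> (real \<times> real) set" where
  "polygon p v = convex hull (v ` {..<p})"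

definition ob_ray :: "nat \<Rightarrow> (nat \<Rightarrow> real \<times> real) \<Rightarrow> nat \<Rightarrow> (real \<times> real) set" where
  "ob_ray p v i = {v i + t *\<^sub>R (v i - v (Suc i mod p)) | t. t \<ge> 0}"

definition ob_rays :: "nat \<Rightarrow> (nat \<Rightarrow> real \<times> real) \<Rightarrow> (real \<times> real) set" where
  "ob_rays p v = (\<Union>i<p. ob_ray p v i)"

text \<open>x lies in region X_(v i): the line through x and v i supports P, with P on the left
  of the directed line from x to v i.\<close>
definition ob_region :: "nat \<Rightarrow> (nat \<Rightarrow> real \<times> real) \<Rightarrow> nat \<Rightarrow> (real \<times> real) set" where
  "ob_region p v i = {x. x \<notin> polygon p v \<and> (\<forall>j<p. cross (v i - x) (v j - x) \<ge> 0)}"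

definition ob_index :: "nat \<Rightarrow> (nat \<Rightarrow> real \<times> real) \<Rightarrow> real \<times> real \<Rightarrow> nat" where
  "ob_index p v x = (SOME i. i < p \<and> x \<in> ob_region p v i)"

definition ob_map :: "nat \<Rightarrow> (nat \<Rightarrow> real \<times> real) \<Rightarrow> real \<times> real \<Rightarrow> real \<times> real" where
  "ob_map p v x = 2 *\<^sub>R v (ob_index p v x) - x"

definition ob_regular :: "nat \<Rightarrow> (nat \<Rightarrow> real \<times> real) \<Rightarrow> real \<times> real \<Rightarrow> bool" where
  "ob_regular p v x \<longleftrightarrow> x \<notin> polygon p v \<and> (\<forall>k. (ob_map p v ^^ k) x \<notin> ob_rays p v)"

definition ob_code :: "nat \<Rightarrow> (nat \<Rightarrow> real \<times> real) \<Rightarrow> nat \<Rightarrow> real \<times> real \<Rightarrow> nat list" where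
  "ob_code p v n x = map (\<lambda>k. ob_index p v ((ob_map p v ^^ k) x)) [0..<n]"

definition ob_complexity :: "nat \<Rightarrow> (nat \<Rightarrow> real \<times> real) \<Rightarrow> nat \<Rightarrow> nat" where
  "ob_complexity p v n = card {ob_code p v n x | x. ob_regular p v x}"

end

theory Submission
  imports Defs
begin
lemma cross_anti: "cross a b = - cross b a" by (simp add: cross_def)
lemma cross_self: "cross a a = 0" by (simp add: cross_def)
lemma cross_tri: "cross (a - c) (b - c) = cross (b - a) (c - a)"
  by (simp add: cross_def algebra_simps)

lemma cross_trans:
  fixes n a b c :: "real \<times> real"
  assumes "0 < inner n a" "0 < inner n b" "0 < inner n c" "0 \<le> cross a b" "0 \<le> cross b c"
  shows "0 \<le> cross a c"
proof (rule ccontr)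
  assume "\<not> 0 \<le> cross a c"
  then have "inner n b * cross a c < 0" using assms(2) by (simp add: mult_pos_neg)
  moreover have "inner n b * cross a c = inner n a * cross b c + inner n c * cross a b"
    by (simp add: cross_def inner_prod_def algebra_simps)
  moreover have "0 \<le> inner n a * cross b c + inner n c * cross a b"
    using assms by simp
  ultimately show False by linarith
qed

lemma cross_min:
  fixes n :: "real \<times> real"
  assumes "finite A" "A \<noteq> {}" "\<forall>a\<in>A. 0 < inner n a"
  shows "\<exists>a\<in>A. \<forall>b\<in>A. 0 \<le> cross a b"
  using assms
proof (induction A rule: finite_ne_induct)
  case (singleton x) then show ?case by (simp add: cross_self)
next
  case (insert x F)
  then obtain a where a: "a \<in> F" "\<forall>b\<in>F. 0 \<le> cross a b" by auto
  show ?case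
  proof (cases "0 \<le> cross a x")
    case True then show ?thesis using a by auto
  next
    case False
    then have xa: "0 \<le> cross x a" using cross_anti[of a x] by simp
    have "\<forall>b\<in>insert x F. 0 \<le> cross x b"
    proof
      fix b assume "b \<in> insert x F"
      then show "0 \<le> cross x b"
      proof
        assume "b = x" then show ?thesis by (simp add: cross_self)
      next
        assume b: "b \<in> F"
        show ?thesis
          by (rule cross_trans[of n x a b]) (use insert.prems a b xa in auto)
      qed
    qed
    then show ?thesis by auto
  qed
qed

definition Sx :: "nat \<Rightarrow> (nat \<Rightarrow> real \<times> real) \<Rightarrow> nat \<Rightarrow> real \<times> real \<Rightarrow> bool" where
  "Sx p v i y \<longleftrightarrow> (\<forall>m<p. m \<noteq> i \<longrightarrow> 0 < cross (v i - y) (v m - y))"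

context
  fixes p :: nat and v :: "nat \<Rightarrow> real \<times> real"
  assumes cvx: "convex_polygon p v"
begin

lemma p3: "p \<ge> 3" using cvx by (simp add: convex_polygon_def)

lemma edge_pos: "i < p \<Longrightarrow> j < p \<Longrightarrow> j \<noteq> i \<Longrightarrow> j \<noteq> Suc i mod p \<Longrightarrow>
   cross (v (Suc i mod p) - v i) (v j - v i) > 0"
  using cvx by (simp add: convex_polygon_def)

lemma suc_mod_ne: "i < p \<Longrightarrow> Suc i mod p \<noteq> i"
proof
  assume "i < p" "Suc i mod p = i"
  then show False using p3
    by (cases "Suc i < p") (auto simp: mod_if split: if_splits)
qed

lemma suc_mod_lt: "Suc i mod p < p" using p3 by simp

lemma third: "i < p \<Longrightarrow> j < p \<Longrightarrow> \<exists>m<p. m \<noteq> i \<and> m \<noteq> j"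
proof (cases "i \<noteq> 0 \<and> j \<noteq> 0")
  case True then show ?thesis using p3 by (intro exI[of _ 0]) auto
next
  case F1: False
  show ?thesis
  proof (cases "i \<noteq> 1 \<and> j \<noteq> 1")
    case True then show ?thesis using p3 by (intro exI[of _ 1]) auto
  next
    case False
    with F1 have "i \<noteq> 2 \<and> j \<noteq> 2" by auto
    then show ?thesis using p3 by (intro exI[of _ 2]) auto
  qed
qed

lemma vert_ne: "i < p \<Longrightarrow> j < p \<Longrightarrow> i \<noteq> j \<Longrightarrow> v i \<noteq> v j"
proof
  assume a: "i < p" "j < p" "i \<noteq> j" "v i = v j"
  show False
  proof (cases "j = Suc i mod p")
    case False
    with edge_pos[OF a(1,2)] a show ?thesis by (simp add: cross_def)
  next
    case True
    obtain m where m: "m < p" "m \<noteq> i" "m \<noteq> j" using third a by blast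
    have "cross (v (Suc i mod p) - v i) (v m - v i) > 0"
      using edge_pos[OF a(1) m(1)] m True by simp
    then show ?thesis using True a by (simp add: cross_def)
  qed
qed

lemma poly_left:
  assumes i: "i < p" and z: "z \<in> polygon p v"
  shows "cross (v (Suc i mod p) - v i) (z - v i) \<ge> 0"
proof -
  let ?e = "v (Suc i mod p) - v i"
  let ?H = "{z. inner (- snd ?e, fst ?e) z \<ge> inner (- snd ?e, fst ?e) (v i)}"
  have H: "?H = {z. cross ?e (z - v i) \<ge> 0}"
    by (auto simp: cross_def inner_prod_def algebra_simps)
  have "v ` {..<p} \<subseteq> ?H"
  proof
    fix y assume "y \<in> v ` {..<p}"
    then obtain j where j: "j < p" "y = v j" by auto
    show "y \<in> ?H"
    proof (cases "j = i \<or> j = Suc i mod p")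
      case True then show ?thesis unfolding H using j by (auto simp: cross_def)
    next
      case False then show ?thesis unfolding H using edge_pos[OF i j(1)] j by auto
    qed
  qed
  then have "polygon p v \<subseteq> ?H" unfolding polygon_def
    by (intro hull_minimal) (auto intro: convex_halfspace_ge)
  then show ?thesis using z H by auto
qed

lemma pred_ex: "i < p \<Longrightarrow> \<exists>m<p. Suc m mod p = i \<and> m \<noteq> i"
proof -
  assume i: "i < p"
  show ?thesis
  proof (cases "i = 0")
    case True
    then show ?thesis using p3 by (intro exI[of _ "p - 1"]) auto
  next
    case False
    then show ?thesis using i by (intro exI[of _ "i - 1"]) auto
  qed
qed

lemma vert_in: "i < p \<Longrightarrow> v i \<in> polygon p v"
  unfolding polygon_def by (rule hull_inc) auto

lemma Sx_notin: assumes i: "i < p" and S: "Sx p v i y" shows "y \<notin> polygon p v"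
proof
  assume y: "y \<in> polygon p v"
  obtain m where m: "m < p" "Suc m mod p = i" "m \<noteq> i" using pred_ex[OF i] by blast
  have "cross (v i - v m) (y - v m) \<ge> 0" using poly_left[OF m(1) y] m by simp
  moreover have "0 < cross (v i - y) (v m - y)" using S m unfolding Sx_def by auto
  moreover have "cross (v i - y) (v m - y) = - cross (v i - v m) (y - v m)"
    by (simp add: cross_def algebra_simps)
  ultimately show False by linarith
qed

lemma Sx_refl_notin: assumes i: "i < p" and S: "Sx p v i y" shows "2 *\<^sub>R v i - y \<notin> polygon p v"
proof
  assume z: "2 *\<^sub>R v i - y \<in> polygon p v"
  have "cross (v (Suc i mod p) - v i) (2 *\<^sub>R v i - y - v i) \<ge> 0" using poly_left[OF i z] .
  moreover have "0 < cross (v i - y) (v (Suc i mod p) - y)"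
    using S suc_mod_ne[OF i] suc_mod_lt unfolding Sx_def by auto
  moreover have "cross (v i - y) (v (Suc i mod p) - y) = - cross (v (Suc i mod p) - v i) (2 *\<^sub>R v i - y - v i)"
    by (simp add: cross_def algebra_simps)
  ultimately show False by linarith
qed

lemma Sx_region: assumes i: "i < p" and S: "Sx p v i y" shows "y \<in> ob_region p v i"
  using Sx_notin[OF i S] S unfolding ob_region_def Sx_def
  by (auto simp: cross_self)

lemma Sx_unique: assumes "i < p" "Sx p v i y" "i' < p" "y \<in> ob_region p v i'" shows "i' = i"
proof (rule ccontr)
  assume ne: "i' \<noteq> i"
  then have "0 < cross (v i - y) (v i' - y)" using assms unfolding Sx_def by auto
  moreover have "0 \<le> cross (v i' - y) (v i - y)" using assms unfolding ob_region_def by auto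
  ultimately show False using cross_anti[of "v i - y" "v i' - y"] by linarith
qed

lemma Sx_index: assumes i: "i < p" and S: "Sx p v i y" shows "ob_index p v y = i"
  unfolding ob_index_def
proof (rule some_equality)
  show "i < p \<and> y \<in> ob_region p v i" using i Sx_region[OF i S] by auto
next
  fix i' assume "i' < p \<and> y \<in> ob_region p v i'"
  then show "i' = i" using Sx_unique[OF i S] by auto
qed

lemma region_ex: assumes y: "y \<notin> polygon p v" shows "\<exists>i<p. y \<in> ob_region p v i"
proof -
  have fin: "finite (v ` {..<p})" by auto
  have "convex (polygon p v)" unfolding polygon_def by (rule convex_convex_hull)
  moreover have "closed (polygon p v)" unfolding polygon_def
    using finite_imp_compact_convex_hull[OF fin] compact_imp_closed by blast
  ultimately obtain a b where ab: "inner a y < b" "\<forall>x\<in>polygon p v. inner a x > b"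
    using separating_hyperplane_closed_point y by blast
  have pos: "\<forall>w\<in>(\<lambda>m. v m - y) ` {..<p}. 0 < inner a w"
  proof
    fix w assume "w \<in> (\<lambda>m. v m - y) ` {..<p}"
    then obtain m where m: "m < p" "w = v m - y" by auto
    have "inner a (v m) > b" using ab(2) vert_in[OF m(1)] by auto
    then show "0 < inner a w" using ab(1) m(2) by (simp add: inner_diff_right)
  qed
  have ne: "(\<lambda>m. v m - y) ` {..<p} \<noteq> {}" using p3 by (auto simp: lessThan_empty_iff)
  obtain w where w: "w \<in> (\<lambda>m. v m - y) ` {..<p}" "\<forall>b\<in>(\<lambda>m. v m - y) ` {..<p}. 0 \<le> cross w b"
    using cross_min[OF _ ne pos] by (metis finite_imageI finite_lessThan)
  then obtain i where i: "i < p" "w = v i - y" by auto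
  have "y \<in> ob_region p v i" unfolding ob_region_def using y w i by auto
  then show ?thesis using i by blast
qed


lemma key_ray:
  assumes i: "i < p" and y: "y \<in> ob_region p v i" and m: "m < p" "m \<noteq> i"
    and z: "cross (v i - y) (v m - y) = 0"
  shows "y \<in> ob_rays p v"
proof -
  define d where "d = v m - v i"
  have dne: "d \<noteq> 0" using vert_ne[OF m(1) i m(2)] unfolding d_def by simp
  then have dd: "inner d d > 0" by simp
  define l where "l = inner (y - v i) d / inner d d"
  have cz: "cross (y - v i) d = 0" using z unfolding d_def by (simp add: cross_def algebra_simps)
  have yl: "y = v i + l *\<^sub>R d"
  proof -
    obtain y1 y2 where yy: "y = (y1, y2)" by (cases y)
    obtain a1 a2 where aa: "v i = (a1, a2)" by (cases "v i")
    obtain d1 d2 where ddd: "d = (d1, d2)" by (cases d)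
    have c0: "(y1 - a1) * d2 - (y2 - a2) * d1 = 0" using cz yy aa ddd by (simp add: cross_def)
    have pos: "d1 * d1 + d2 * d2 > 0" using dd ddd by (simp add: inner_prod_def)
    define D where "D = d1 * d1 + d2 * d2"
    define N where "N = (y1 - a1) * d1 + (y2 - a2) * d2"
    have q1: "D * (y1 - a1) - N * d1 = d2 * ((y1 - a1) * d2 - (y2 - a2) * d1)"
      unfolding D_def N_def by (simp add: algebra_simps)
    have q2: "D * (y2 - a2) - N * d2 = - d1 * ((y1 - a1) * d2 - (y2 - a2) * d1)"
      unfolding D_def N_def by (simp add: algebra_simps)
    have Dne: "D \<noteq> 0" using pos unfolding D_def by linarith
    have "y1 - a1 = N * d1 / D" using q1 c0 Dne by (simp add: nonzero_eq_divide_eq mult.commute)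
    then have e1: "y1 = a1 + N / D * d1" by simp
    have "y2 - a2 = N * d2 / D" using q2 c0 Dne by (simp add: nonzero_eq_divide_eq mult.commute)
    then have e2: "y2 = a2 + N / D * d2" by simp
    show ?thesis using e1 e2 yy aa ddd unfolding l_def D_def N_def by (simp add: inner_prod_def)
  qed
  have reg: "\<forall>k<p. 0 \<le> cross (v i - y) (v k - y)" using y unfolding ob_region_def by auto
  have ck: "cross (v i - y) (v k - y) = - l * cross d (v k - v i)" for k
    unfolding yl by (simp add: cross_def algebra_simps)
  have ynot: "y \<notin> polygon p v" using y unfolding ob_region_def by auto
  show ?thesis
  proof (cases "l < 0")
    case True
    then have ge: "\<forall>k<p. 0 \<le> cross d (v k - v i)"
      using reg ck True by (auto simp: mult_le_0_iff)
    have "m = Suc i mod p"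
    proof (rule ccontr)
      assume ne: "m \<noteq> Suc i mod p"
      have "cross (v (Suc i mod p) - v i) d > 0" using edge_pos[OF i m(1) m(2) ne] d_def by simp
      moreover have "0 \<le> cross d (v (Suc i mod p) - v i)" using ge suc_mod_lt by auto
      ultimately show False using cross_anti[of d "v (Suc i mod p) - v i"] by linarith
    qed
    then have "y = v i + (- l) *\<^sub>R (v i - v (Suc i mod p))" using yl d_def by (simp add: algebra_simps)
    then have "y \<in> ob_ray p v i" unfolding ob_ray_def using True by (intro CollectI exI[of _ "- l"]) auto
    then show ?thesis unfolding ob_rays_def using i by auto
  next
    case False
    show ?thesis
    proof (cases "l \<le> 1")
      case True
      have "y = (1 - l) *\<^sub>R v i + l *\<^sub>R v m" using yl d_def by (simp add: algebra_simps)
      moreover have "(1 - l) *\<^sub>R v i + l *\<^sub>R v m \<in> polygon p v"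
        unfolding polygon_def
        by (rule convexD_alt) (use False True vert_in[OF i] vert_in[OF m(1)] in \<open>auto simp: polygon_def\<close>)
      ultimately show ?thesis using ynot by simp
    next
      case F2: False
      then have le: "\<forall>k<p. cross d (v k - v i) \<le> 0"
        using reg ck F2 by (auto simp: mult_le_0_iff)
      have "i = Suc m mod p"
      proof (rule ccontr)
        assume ne: "i \<noteq> Suc m mod p"
        have "cross (v (Suc m mod p) - v m) (v i - v m) > 0" using edge_pos[OF m(1) i] m(2) ne by auto
        moreover have "cross d (v (Suc m mod p) - v i) \<le> 0" using le suc_mod_lt by auto
        moreover have "cross d (v (Suc m mod p) - v i) = cross (v (Suc m mod p) - v m) (v i - v m)"
          unfolding d_def by (simp add: cross_def algebra_simps)
        ultimately show False by linarith
      qed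
      then have "y = v m + (l - 1) *\<^sub>R (v m - v (Suc m mod p))" using yl d_def by (simp add: algebra_simps)
      then have "y \<in> ob_ray p v m" unfolding ob_ray_def using F2 by (intro CollectI exI[of _ "l - 1"]) auto
      then show ?thesis unfolding ob_rays_def using m by auto
    qed
  qed
qed

lemma region_strict:
  assumes i: "i < p" and y: "y \<in> ob_region p v i" and nr: "y \<notin> ob_rays p v"
  shows "Sx p v i y"
  unfolding Sx_def
proof (intro allI impI)
  fix m assume m: "m < p" "m \<noteq> i"
  have "0 \<le> cross (v i - y) (v m - y)" using y m unfolding ob_region_def by auto
  moreover have "cross (v i - y) (v m - y) \<noteq> 0" using key_ray[OF i y m] nr by auto
  ultimately show "0 < cross (v i - y) (v m - y)" by simp
qed

lemma Sx_inj:
  assumes "i < p" "Sx p v i y" "i' < p" "Sx p v i' y'" "2 *\<^sub>R v i - y = 2 *\<^sub>R v i' - y'"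
  shows "i = i'"
proof (rule ccontr)
  assume ne: "i \<noteq> i'"
  have a: "0 < cross (v i - y) (v i' - y)" using assms ne unfolding Sx_def by auto
  have b: "0 < cross (v i' - y') (v i - y')" using assms ne unfolding Sx_def by auto
  have y': "y' = 2 *\<^sub>R v i' - 2 *\<^sub>R v i + y" using assms(5) by (simp add: algebra_simps)
  have "cross (v i - y) (v i' - y) + cross (v i' - y') (v i - y') = 0"
    unfolding y' by (simp add: cross_def algebra_simps)
  then show False using a b by linarith
qed


lemma map_Sx: "i < p \<Longrightarrow> Sx p v i y \<Longrightarrow> ob_map p v y = 2 *\<^sub>R v i - y"
  unfolding ob_map_def using Sx_index by simp

lemma regular_orbit:
  assumes r: "ob_regular p v x"
  shows "(ob_map p v ^^ k) x \<notin> polygon p v \<and> ob_index p v ((ob_map p v ^^ k) x) < p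
     \<and> Sx p v (ob_index p v ((ob_map p v ^^ k) x)) ((ob_map p v ^^ k) x)"
proof (induction k)
  case 0
  have y: "x \<notin> polygon p v" using r unfolding ob_regular_def by auto
  obtain i where i: "i < p" "x \<in> ob_region p v i" using region_ex[OF y] by blast
  have nr: "x \<notin> ob_rays p v" using r unfolding ob_regular_def by (metis funpow_0)
  have S: "Sx p v i x" using region_strict[OF i nr] .
  then show ?case using y i Sx_index[OF i(1) S] by simp
next
  case (Suc k)
  let ?y = "(ob_map p v ^^ k) x"
  let ?i = "ob_index p v ?y"
  have "(ob_map p v ^^ Suc k) x = 2 *\<^sub>R v ?i - ?y" by (simp add: ob_map_def)
  then have y: "(ob_map p v ^^ Suc k) x \<notin> polygon p v" using Sx_refl_notin Suc.IH by simp
  obtain i where i: "i < p" "(ob_map p v ^^ Suc k) x \<in> ob_region p v i" using region_ex[OF y] by blast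
  have nr: "(ob_map p v ^^ Suc k) x \<notin> ob_rays p v" using r unfolding ob_regular_def by blast
  have S: "Sx p v i ((ob_map p v ^^ Suc k) x)" using region_strict[OF i nr] .
  then show ?case using y i Sx_index[OF i(1) S] by simp
qed

lemma regular_shift: assumes r: "ob_regular p v x" shows "ob_regular p v ((ob_map p v ^^ q) x)"
proof -
  have e: "(ob_map p v ^^ k) ((ob_map p v ^^ q) x) = (ob_map p v ^^ (k + q)) x" for k
    by (simp add: funpow_add)
  have "(ob_map p v ^^ q) x \<notin> polygon p v" using regular_orbit[OF r] by blast
  moreover have "\<forall>k. (ob_map p v ^^ k) ((ob_map p v ^^ q) x) \<notin> ob_rays p v"
    unfolding e using r unfolding ob_regular_def by blast
  ultimately show ?thesis unfolding ob_regular_def by blast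
qed

lemma code_Suc: "ob_code p v (Suc n) x = ob_code p v n x @ [ob_index p v ((ob_map p v ^^ n) x)]"
  unfolding ob_code_def by simp

lemma code_nth: "k < n \<Longrightarrow> ob_code p v n x ! k = ob_index p v ((ob_map p v ^^ k) x)"
  unfolding ob_code_def by simp

lemma code_len: "length (ob_code p v n x) = n"
  unfolding ob_code_def by simp

lemma code_take: "take n (ob_code p v (Suc n) x) = ob_code p v n x"
  unfolding code_Suc by (simp add: code_len)

lemma code_set: assumes "ob_regular p v x" shows "set (ob_code p v n x) \<subseteq> {..<p}"
  unfolding ob_code_def using regular_orbit[OF assms] by auto

definition Wc :: "nat \<Rightarrow> (nat \<Rightarrow> real \<times> real) \<Rightarrow> nat \<Rightarrow> nat list set" where
  "Wc p' v' n = {ob_code p' v' n x | x. ob_regular p' v' x}"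

lemma Wc_I: "ob_regular p v x \<Longrightarrow> ob_code p v n x \<in> Wc p v n"
  unfolding Wc_def by blast

lemma Wc_E: "w \<in> Wc p v n \<Longrightarrow> (\<And>x. ob_regular p v x \<Longrightarrow> w = ob_code p v n x \<Longrightarrow> thesis) \<Longrightarrow> thesis"
  unfolding Wc_def by blast

lemma Wc_card: "ob_complexity p v n = card (Wc p v n)"
  unfolding ob_complexity_def Wc_def ..

lemma Wc_finite: "finite (Wc p v n)"
proof (rule finite_subset)
  show "Wc p v n \<subseteq> {xs. set xs \<subseteq> {..<p} \<and> length xs = n}"
    unfolding Wc_def using code_set code_len by auto
  show "finite {xs. set xs \<subseteq> {..<p} \<and> length xs = n}"
    by (rule finite_lists_length_eq) simp
qed

lemma Wc_take: "Wc p v n = take n ` Wc p v (Suc n)"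
proof
  show "Wc p v n \<subseteq> take n ` Wc p v (Suc n)"
  proof
    fix w assume "w \<in> Wc p v n"
    then obtain x where x: "ob_regular p v x" "w = ob_code p v n x" unfolding Wc_def by blast
    then have "ob_code p v (Suc n) x \<in> Wc p v (Suc n)" unfolding Wc_def by blast
    moreover have "w = take n (ob_code p v (Suc n) x)" using x code_take by simp
    ultimately show "w \<in> take n ` Wc p v (Suc n)" by blast
  qed
next
  show "take n ` Wc p v (Suc n) \<subseteq> Wc p v n"
  proof
    fix w assume "w \<in> take n ` Wc p v (Suc n)"
    then obtain x where x: "ob_regular p v x" "w = take n (ob_code p v (Suc n) x)" unfolding Wc_def by blast
    then have "w = ob_code p v n x" using code_take by simp
    then show "w \<in> Wc p v n" using x(1) unfolding Wc_def by blast
  qed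
qed

lemma Wc_mono: "card (Wc p v n) \<le> card (Wc p v (Suc n))"
proof -
  have e: "take n ` Wc p v (Suc n) = Wc p v n" by (rule Wc_take[symmetric])
  have "card (take n ` Wc p v (Suc n)) \<le> card (Wc p v (Suc n))" by (rule card_image_le[OF Wc_finite])
  then show ?thesis unfolding e .
qed

lemma determ:
  assumes c: "card (Wc p v (Suc n)) \<le> card (Wc p v n)"
    and y: "ob_regular p v y" and z: "ob_regular p v z" and eq: "ob_code p v n y = ob_code p v n z"
  shows "ob_index p v ((ob_map p v ^^ n) y) = ob_index p v ((ob_map p v ^^ n) z)"
proof -
  have e: "take n ` Wc p v (Suc n) = Wc p v n" by (rule Wc_take[symmetric])
  have "card (take n ` Wc p v (Suc n)) \<le> card (Wc p v (Suc n))" by (rule card_image_le[OF Wc_finite])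
  then have "card (take n ` Wc p v (Suc n)) = card (Wc p v (Suc n))"
    using c unfolding e by simp
  then have inj: "inj_on (take n) (Wc p v (Suc n))"
    using eq_card_imp_inj_on[OF Wc_finite] by blast
  have "ob_code p v (Suc n) y \<in> Wc p v (Suc n)" "ob_code p v (Suc n) z \<in> Wc p v (Suc n)"
    using y z Wc_I by auto
  moreover have "take n (ob_code p v (Suc n) y) = take n (ob_code p v (Suc n) z)"
    using eq code_take by simp
  ultimately have "ob_code p v (Suc n) y = ob_code p v (Suc n) z" using inj by (simp add: inj_on_def)
  then show ?thesis unfolding code_Suc by simp
qed


definition Fl :: "(nat \<Rightarrow> real \<times> real) \<Rightarrow> nat list \<Rightarrow> real \<times> real" where
  "Fl v' l = foldr (\<lambda>a c. 2 *\<^sub>R v' a - c) l 0"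

definition Lset :: "nat \<Rightarrow> (nat \<Rightarrow> real \<times> real) \<Rightarrow> real \<Rightarrow> real \<times> real \<Rightarrow> nat \<Rightarrow> (real \<times> real) set" where
  "Lset p' v' s c j = {x. cross (v' j - v' (Suc j mod p')) (s *\<^sub>R x + c - v' j) = 0}"

lemma orbit_affine: "\<exists>l. (ob_map p v ^^ k) x = ((-1)^k) *\<^sub>R x + Fl v l"
proof (induction k)
  case 0 show ?case by (intro exI[of _ "[]"]) (simp add: Fl_def)
next
  case (Suc k)
  then obtain l where l: "(ob_map p v ^^ k) x = ((-1)^k) *\<^sub>R x + Fl v l" by blast
  let ?a = "ob_index p v ((ob_map p v ^^ k) x)"
  have "(ob_map p v ^^ Suc k) x = 2 *\<^sub>R v ?a - (ob_map p v ^^ k) x" by (simp add: ob_map_def)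
  also have "\<dots> = ((-1)^Suc k) *\<^sub>R x + Fl v (?a # l)" unfolding l by (simp add: Fl_def algebra_simps)
  finally show ?case by blast
qed

lemma Lset_negl: assumes j: "j < p" and s: "s \<noteq> 0" shows "negligible (Lset p v s c j)"
proof -
  let ?u = "v j - v (Suc j mod p)"
  have une: "?u \<noteq> 0" using vert_ne[OF j suc_mod_lt] suc_mod_ne[OF j] by auto
  have eq: "Lset p v s c j = {x. inner (s *\<^sub>R (- snd ?u, fst ?u)) x = - cross ?u (c - v j)}"
    unfolding Lset_def by (auto simp: cross_def inner_prod_def algebra_simps)
  have "s *\<^sub>R (- snd ?u, fst ?u) \<noteq> 0" using une s by (auto simp: prod_eq_iff)
  then show ?thesis unfolding eq by (intro negligible_hyperplane) simp
qed

lemma irregular_in: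
  assumes x: "x \<notin> polygon p v" and nr: "\<not> ob_regular p v x"
  shows "\<exists>s\<in>{1,-1}. \<exists>l. \<exists>j<p. x \<in> Lset p v s (Fl v l) j"
proof -
  obtain k where k: "(ob_map p v ^^ k) x \<in> ob_rays p v" using x nr unfolding ob_regular_def by blast
  then obtain j t where jt: "j < p" "t \<ge> 0" "(ob_map p v ^^ k) x = v j + t *\<^sub>R (v j - v (Suc j mod p))"
    unfolding ob_rays_def ob_ray_def by blast
  obtain l where l: "(ob_map p v ^^ k) x = ((-1)^k) *\<^sub>R x + Fl v l" using orbit_affine by blast
  have "((-1::real)^k) *\<^sub>R x + Fl v l - v j = t *\<^sub>R (v j - v (Suc j mod p))" using jt(3) l by simp
  then have "cross (v j - v (Suc j mod p)) (((-1::real)^k) *\<^sub>R x + Fl v l - v j)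
      = cross (v j - v (Suc j mod p)) (t *\<^sub>R (v j - v (Suc j mod p)))" by simp
  also have "\<dots> = 0" by (simp add: cross_def)
  finally have "x \<in> Lset p v ((-1)^k) (Fl v l) j" unfolding Lset_def by simp
  moreover have "((-1::real)^k) \<in> {1,-1}" by (cases "even k") auto
  ultimately show ?thesis using jt(1) by blast
qed

lemma dense_regular:
  assumes U: "open U" "U \<noteq> {}" "U \<inter> polygon p v = {}"
  shows "\<exists>x\<in>U. ob_regular p v x"
proof -
  let ?I = "{1::real,-1} \<times> (UNIV :: nat list set) \<times> {..<p}"
  let ?B = "(\<lambda>(s,l,j). Lset p v s (Fl v l) j) ` ?I"
  have "countable ?I" by (intro countable_SIGMA) auto
  then have cB: "countable ?B" by simp
  have "negligible (\<Union>?B)"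
  proof (rule negligible_countable_Union[OF cB])
    fix S assume "S \<in> ?B"
    then obtain s l j where "s \<in> {1,-1}" "j < p" "S = Lset p v s (Fl v l) j" by auto
    then show "negligible S" using Lset_negl[of j s "Fl v l"] by auto
  qed
  moreover have "\<not> negligible U" using open_not_negligible U by blast
  ultimately have "\<not> U \<subseteq> \<Union>?B" using negligible_subset by blast
  then obtain x where x: "x \<in> U" "x \<notin> \<Union>?B" by blast
  have "ob_regular p v x"
  proof (rule ccontr)
    assume "\<not> ob_regular p v x"
    moreover have "x \<notin> polygon p v" using x U by auto
    ultimately obtain s l j where "s \<in> {1,-1}" "j < p" "x \<in> Lset p v s (Fl v l) j"
      using irregular_in by blast
    then have "x \<in> \<Union>?B" by blast
    then show False using x by blast
  qed
  then show ?thesis using x by blast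
qed


lemma generic_dir: "\<exists>e::real \<times> real. \<forall>m<p. \<forall>m'<p. m \<noteq> m' \<longrightarrow> cross e (v m - v m') \<noteq> 0"
proof -
  let ?P = "{(m, m'). m < p \<and> m' < p \<and> m \<noteq> m'}"
  let ?F = "(\<lambda>(m, m'). snd (v m - v m') / fst (v m - v m')) ` ?P"
  have finP: "finite ?P" by (rule finite_subset[of _ "{..<p} \<times> {..<p}"]) auto
  then have "finite ?F" by simp
  then have "finite (real -` ?F)" by (rule finite_vimageI) (simp add: inj_def)
  then obtain t :: nat where "t \<notin> real -` ?F" using ex_new_if_finite[OF infinite_UNIV_nat] by blast
  then have t: "real t \<notin> ?F" by simp
  show ?thesis
  proof (intro exI[of _ "(1, real t)"] allI impI)
    fix m m' assume mm: "m < p" "m' < p" "m \<noteq> m'"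
    have w: "v m - v m' \<noteq> 0" using vert_ne[OF mm] by simp
    show "cross (1, real t) (v m - v m') \<noteq> 0"
    proof
      assume c: "cross (1, real t) (v m - v m') = 0"
      show False
      proof (cases "fst (v m - v m') = 0")
        case True
        then have "snd (v m - v m') = 0" using c by (simp add: cross_def)
        then show False using True w by (simp add: prod_eq_iff)
      next
        case False
        then have "real t = snd (v m - v m') / fst (v m - v m')" using c
          by (simp add: cross_def field_simps)
        moreover have "(m, m') \<in> ?P" using mm by simp
        ultimately show False using t by force
      qed
    qed
  qed
qed

lemma extremes: "\<exists>i j e. i < p \<and> j < p \<and> i \<noteq> j \<and> (\<forall>m<p. m \<noteq> i \<longrightarrow> cross e (v m - v i) < 0)
   \<and> (\<forall>m<p. m \<noteq> j \<longrightarrow> 0 < cross e (v m - v j))"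
proof -
  obtain e where e: "\<forall>m<p. \<forall>m'<p. m \<noteq> m' \<longrightarrow> cross e (v m - v m') \<noteq> 0" using generic_dir by blast
  define \<phi> where "\<phi> m = cross e (v m)" for m
  have cd: "cross e (v m - v m') = \<phi> m - \<phi> m'" for m m' unfolding \<phi>_def by (simp add: cross_def algebra_simps)
  have fin: "finite (\<phi> ` {..<p})" by simp
  have ne: "\<phi> ` {..<p} \<noteq> {}" using p3 by (auto simp: lessThan_empty_iff)
  obtain i where i: "i < p" "\<phi> i = Max (\<phi> ` {..<p})" using Max_in[OF fin ne] by auto
  obtain j where j: "j < p" "\<phi> j = Min (\<phi> ` {..<p})" using Min_in[OF fin ne] by auto
  have imax: "\<phi> m \<le> \<phi> i" if "m < p" for m using i(2) Max_ge[OF fin] that by auto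
  have jmin: "\<phi> j \<le> \<phi> m" if "m < p" for m using j(2) Min_le[OF fin] that by auto
  have A: "\<forall>m<p. m \<noteq> i \<longrightarrow> cross e (v m - v i) < 0"
  proof (intro allI impI)
    fix m assume "m < p" "m \<noteq> i"
    then have "\<phi> m - \<phi> i \<noteq> 0" using e i(1) cd by metis
    then show "cross e (v m - v i) < 0" using imax[OF \<open>m < p\<close>] cd by simp
  qed
  have B: "\<forall>m<p. m \<noteq> j \<longrightarrow> 0 < cross e (v m - v j)"
  proof (intro allI impI)
    fix m assume "m < p" "m \<noteq> j"
    then have "\<phi> m - \<phi> j \<noteq> 0" using e j(1) cd by metis
    then show "0 < cross e (v m - v j)" using jmin[OF \<open>m < p\<close>] cd by simp
  qed
  have "i \<noteq> j"
  proof
    assume ij: "i = j"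
    obtain m where m: "m < p" "m \<noteq> i" "m \<noteq> j" using third i(1) j(1) by blast
    then show False using A B ij by (metis not_less_iff_gr_or_eq less_asym)
  qed
  then show ?thesis using i(1) j(1) A B by blast
qed

lemma lin_bound: fixes a c :: real assumes "\<forall>k::nat. 0 < a + real k * c" shows "0 \<le> c"
proof (rule ccontr)
  assume "\<not> 0 \<le> c"
  then have c: "c < 0" by simp
  obtain k :: nat where "a < real k * (- c)" using ex_less_of_nat_mult[of "- c" a] c by auto
  then have "a + real k * c < 0" by (simp add: algebra_simps)
  then show False using assms by (metis not_less_iff_gr_or_eq less_asym)
qed

lemma noncollinear: assumes "i < p" "j < p" "i \<noteq> j"
  shows "\<exists>m<p. m \<noteq> i \<and> m \<noteq> j \<and> cross (v j - v i) (v m - v i) \<noteq> 0"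
proof (cases "j = Suc i mod p")
  case True
  obtain m where m: "m < p" "m \<noteq> i" "m \<noteq> j" using third assms by blast
  have "cross (v (Suc i mod p) - v i) (v m - v i) > 0" using edge_pos[OF assms(1) m(1) m(2)] m True by simp
  then show ?thesis using m True by auto
next
  case False
  have "cross (v (Suc i mod p) - v i) (v j - v i) > 0" using edge_pos[OF assms(1) assms(2)] assms False by auto
  then have "cross (v j - v i) (v (Suc i mod p) - v i) \<noteq> 0" using cross_anti by (metis neg_0_equal_iff_equal less_irrefl)
  then show ?thesis using suc_mod_lt suc_mod_ne[OF assms(1)] False by (metis)
qed

definition alt :: "nat \<Rightarrow> nat \<Rightarrow> nat \<Rightarrow> nat" where "alt i j k = (if even k then i else j)"

lemma no_alt:
  assumes ij: "i < p" "j < p" "i \<noteq> j" and r: "ob_regular p v x"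
    and a: "\<forall>k. ob_index p v ((ob_map p v ^^ k) x) = alt i j k"
  shows False
proof -
  define D where "D = 2 *\<^sub>R (v j - v i)"
  have T2: "(ob_map p v ^^ (2 * k)) x = x + real k *\<^sub>R D" for k
  proof (induction k)
    case 0 show ?case by simp
  next
    case (Suc k)
    have i: "ob_index p v ((ob_map p v ^^ (2 * k)) x) = i" using a[rule_format, of "2 * k"] by (simp add: alt_def)
    have j: "ob_index p v ((ob_map p v ^^ Suc (2 * k)) x) = j"
      using a[rule_format, of "Suc (2 * k)"] unfolding alt_def by presburger
    have "(ob_map p v ^^ (2 * Suc k)) x = ob_map p v (ob_map p v ((ob_map p v ^^ (2 * k)) x))" by simp
    also have "\<dots> = 2 *\<^sub>R v j - (2 *\<^sub>R v i - (ob_map p v ^^ (2 * k)) x)"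
      using i j by (simp add: ob_map_def)
    also have "\<dots> = x + real (Suc k) *\<^sub>R D" unfolding Suc D_def by (simp add: algebra_simps)
    finally show ?case .
  qed
  have T21: "(ob_map p v ^^ Suc (2 * k)) x = 2 *\<^sub>R v i - (x + real k *\<^sub>R D)" for k
  proof -
    have i: "ob_index p v ((ob_map p v ^^ (2 * k)) x) = i" using a[rule_format, of "2 * k"] by (simp add: alt_def)
    show ?thesis using T2[of k] i by (simp add: ob_map_def)
  qed
  have Si: "Sx p v i (x + real k *\<^sub>R D)" for k
    using regular_orbit[OF r, of "2 * k"] a[rule_format, of "2 * k"] T2[of k] by (simp add: alt_def)
  have Sj: "Sx p v j (2 *\<^sub>R v i - (x + real k *\<^sub>R D))" for k
  proof -
    have "ob_index p v ((ob_map p v ^^ Suc (2 * k)) x) = j"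
      using a[rule_format, of "Suc (2 * k)"] unfolding alt_def by presburger
    then show ?thesis using regular_orbit[OF r, of "Suc (2 * k)"] T21[of k] by metis
  qed
  obtain m where m: "m < p" "m \<noteq> i" "m \<noteq> j" "cross (v j - v i) (v m - v i) \<noteq> 0"
    using noncollinear[OF ij] by blast
  have "\<forall>k::nat. 0 < cross (v i - x) (v m - v i) + real k * (- cross D (v m - v i))"
  proof
    fix k :: nat
    have "0 < cross (v i - (x + real k *\<^sub>R D)) (v m - (x + real k *\<^sub>R D))" using Si[of k] m unfolding Sx_def by auto
    also have "cross (v i - (x + real k *\<^sub>R D)) (v m - (x + real k *\<^sub>R D))
       = cross (v i - x) (v m - v i) + real k * (- cross D (v m - v i))"
      by (simp add: cross_def algebra_simps)
    finally show "0 < cross (v i - x) (v m - v i) + real k * (- cross D (v m - v i))" .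
  qed
  then have c1: "0 \<le> - cross D (v m - v i)" by (rule lin_bound)
  have "\<forall>k::nat. 0 < cross (v j - 2 *\<^sub>R v i + x) (v m - v j) + real k * cross D (v m - v j)"
  proof
    fix k :: nat
    have "0 < cross (v j - (2 *\<^sub>R v i - (x + real k *\<^sub>R D))) (v m - (2 *\<^sub>R v i - (x + real k *\<^sub>R D)))"
      using Sj[of k] m unfolding Sx_def by auto
    also have "cross (v j - (2 *\<^sub>R v i - (x + real k *\<^sub>R D))) (v m - (2 *\<^sub>R v i - (x + real k *\<^sub>R D)))
       = cross (v j - 2 *\<^sub>R v i + x) (v m - v j) + real k * cross D (v m - v j)"
      by (simp add: cross_def algebra_simps)
    finally show "0 < cross (v j - 2 *\<^sub>R v i + x) (v m - v j) + real k * cross D (v m - v j)" .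
  qed
  then have c2: "0 \<le> cross D (v m - v j)" by (rule lin_bound)
  have e1: "cross D (v m - v j) = cross D (v m - v i)" unfolding D_def by (simp add: cross_def algebra_simps)
  have e2: "cross D (v m - v i) = 2 * cross (v j - v i) (v m - v i)" unfolding D_def by (simp add: cross_def algebra_simps)
  show False using c1 c2 e1 e2 m(4) by linarith
qed


lemma open_fin_all:
  assumes "finite K" "\<And>k. k \<in> K \<Longrightarrow> open {x. P k x}"
  shows "open {x. \<forall>k\<in>K. P k x}"
proof -
  have "{x. \<forall>k\<in>K. P k x} = (\<Inter>k\<in>K. {x. P k x})" by auto
  then show ?thesis using assms by (auto intro!: open_INT)
qed

lemma open_imp_pos:
  fixes f :: "real \<times> real \<Rightarrow> real"
  assumes "continuous_on UNIV f"
  shows "open {x. A \<longrightarrow> 0 < f x}"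
proof (cases A)
  case True
  then show ?thesis using open_Collect_less[OF continuous_on_const assms] by simp
qed simp

lemma cont_cross: "continuous_on UNIV (\<lambda>x::real \<times> real. cross (a - (s *\<^sub>R x + c)) (b - (s *\<^sub>R x + c)))"
  unfolding cross_def by (intro continuous_intros)

lemma ev_pos: fixes a b :: real assumes b: "0 < b" shows "eventually (\<lambda>s. 0 < a + s * b) at_top"
  unfolding eventually_at_top_linorder
proof (intro exI[of _ "(\<bar>a\<bar> + 1) / b"] allI impI)
  fix s assume "(\<bar>a\<bar> + 1) / b \<le> s"
  then have "\<bar>a\<bar> + 1 \<le> s * b" using b by (simp add: pos_divide_le_eq)
  then show "0 < a + s * b" by linarith
qed

lemma alt_start:
  assumes ij: "i < p" "j < p" "i \<noteq> j"
    and ei: "\<forall>m<p. m \<noteq> i \<longrightarrow> cross e (v m - v i) < 0"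
    and ej: "\<forall>m<p. m \<noteq> j \<longrightarrow> 0 < cross e (v m - v j)"
  shows "\<exists>x. ob_regular p v x \<and> (\<forall>k\<le>2 * L + 1. ob_index p v ((ob_map p v ^^ k) x) = alt i j k)"
proof -
  define D where "D = 2 *\<^sub>R (v j - v i)"
  define Q where "Q k m x \<longleftrightarrow> (m \<noteq> i \<longrightarrow> 0 < cross (v i - (1 *\<^sub>R x + real k *\<^sub>R D)) (v m - (1 *\<^sub>R x + real k *\<^sub>R D)))
      \<and> (m \<noteq> j \<longrightarrow> 0 < cross (v j - ((-1) *\<^sub>R x + (2 *\<^sub>R v i - real k *\<^sub>R D))) (v m - ((-1) *\<^sub>R x + (2 *\<^sub>R v i - real k *\<^sub>R D))))"
    for k m x
  define U where "U = {x. \<forall>k\<in>{..L}. \<forall>m\<in>{..<p}. Q k m x}"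
  have "open U" unfolding U_def Q_def
    by (intro open_fin_all finite_lessThan finite_atMost open_Collect_conj open_imp_pos cont_cross)
  have Qs: "\<forall>\<^sub>F s in at_top. \<forall>k\<in>{..L}. \<forall>m\<in>{..<p}. Q k m (s *\<^sub>R e)"
  proof (intro eventually_ball_finite ballI finite_atMost finite_lessThan)
    fix k m assume k: "k \<in> {..L}" and m: "m \<in> {..<p}"
    have e1: "cross (v i - (1 *\<^sub>R (s *\<^sub>R e) + real k *\<^sub>R D)) (v m - (1 *\<^sub>R (s *\<^sub>R e) + real k *\<^sub>R D))
       = cross (v i - real k *\<^sub>R D) (v m - v i) + s * (- cross e (v m - v i))" for s
      by (simp add: cross_def algebra_simps)
    have e2: "cross (v j - ((-1) *\<^sub>R (s *\<^sub>R e) + (2 *\<^sub>R v i - real k *\<^sub>R D))) (v m - ((-1) *\<^sub>R (s *\<^sub>R e) + (2 *\<^sub>R v i - real k *\<^sub>R D)))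
       = cross (v j - 2 *\<^sub>R v i + real k *\<^sub>R D) (v m - v j) + s * cross e (v m - v j)" for s
      by (simp add: cross_def algebra_simps)
    have A: "\<forall>\<^sub>F s in at_top. m \<noteq> i \<longrightarrow> 0 < cross (v i - (1 *\<^sub>R (s *\<^sub>R e) + real k *\<^sub>R D)) (v m - (1 *\<^sub>R (s *\<^sub>R e) + real k *\<^sub>R D))"
    proof (cases "m = i")
      case False
      then have "0 < - cross e (v m - v i)" using ei m by auto
      from ev_pos[OF this, of "cross (v i - real k *\<^sub>R D) (v m - v i)"]
      show ?thesis unfolding e1 by (rule eventually_mono) simp
    qed simp
    have B: "\<forall>\<^sub>F s in at_top. m \<noteq> j \<longrightarrow> 0 < cross (v j - ((-1) *\<^sub>R (s *\<^sub>R e) + (2 *\<^sub>R v i - real k *\<^sub>R D))) (v m - ((-1) *\<^sub>R (s *\<^sub>R e) + (2 *\<^sub>R v i - real k *\<^sub>R D)))"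
    proof (cases "m = j")
      case False
      then have "0 < cross e (v m - v j)" using ej m by auto
      from ev_pos[OF this, of "cross (v j - 2 *\<^sub>R v i + real k *\<^sub>R D) (v m - v j)"]
      show ?thesis unfolding e2 by (rule eventually_mono) simp
    qed simp
    show "\<forall>\<^sub>F s in at_top. Q k m (s *\<^sub>R e)" using eventually_conj[OF A B] unfolding Q_def by simp
  qed
  then obtain s where "\<forall>k\<in>{..L}. \<forall>m\<in>{..<p}. Q k m (s *\<^sub>R e)"
    unfolding eventually_at_top_linorder by blast
  then have "U \<noteq> {}" unfolding U_def by blast
  have QS: "Sx p v i (x + real k *\<^sub>R D) \<and> Sx p v j (2 *\<^sub>R v i - (x + real k *\<^sub>R D))" if "x \<in> U" "k \<le> L" for x k
  proof -
    have "\<forall>m\<in>{..<p}. Q k m x" using that unfolding U_def by auto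
    moreover have eq: "2 *\<^sub>R v i - real k *\<^sub>R D - x = 2 *\<^sub>R v i - (x + real k *\<^sub>R D)"
      by (simp add: algebra_simps)
    ultimately show ?thesis unfolding Q_def Sx_def by (auto simp: eq)
  qed
  have "U \<inter> polygon p v = {}"
  proof (rule ccontr)
    assume "U \<inter> polygon p v \<noteq> {}"
    then obtain x where x: "x \<in> U" "x \<in> polygon p v" by blast
    have "Sx p v i x" using QS[OF x(1), of 0] by simp
    then show False using Sx_notin[OF ij(1)] x by blast
  qed
  then obtain x where x: "x \<in> U" "ob_regular p v x"
    using dense_regular[OF \<open>open U\<close> \<open>U \<noteq> {}\<close>] by blast
  have ind: "k \<le> L \<longrightarrow> (ob_map p v ^^ (2 * k)) x = x + real k *\<^sub>R D
     \<and> ob_index p v ((ob_map p v ^^ (2 * k)) x) = i \<and> ob_index p v ((ob_map p v ^^ Suc (2 * k)) x) = j" for k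
  proof (induction k)
    case 0
    have "Sx p v i x" "Sx p v j (2 *\<^sub>R v i - x)" using QS[OF x(1), of 0] by auto
    then show ?case using Sx_index[OF ij(1)] Sx_index[OF ij(2)] map_Sx[OF ij(1)] by simp
  next
    case (Suc k)
    show ?case
    proof
      assume kL: "Suc k \<le> L"
      then have IH: "(ob_map p v ^^ (2 * k)) x = x + real k *\<^sub>R D"
         "ob_index p v ((ob_map p v ^^ (2 * k)) x) = i" "ob_index p v ((ob_map p v ^^ Suc (2 * k)) x) = j"
        using Suc by auto
      have "(ob_map p v ^^ (2 * Suc k)) x = ob_map p v (ob_map p v ((ob_map p v ^^ (2 * k)) x))" by simp
      also have "\<dots> = 2 *\<^sub>R v j - (2 *\<^sub>R v i - (ob_map p v ^^ (2 * k)) x)"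
        using IH(2) IH(3) by (simp add: ob_map_def)
      also have "\<dots> = x + real (Suc k) *\<^sub>R D" unfolding IH(1) D_def by (simp add: algebra_simps)
      finally have E: "(ob_map p v ^^ (2 * Suc k)) x = x + real (Suc k) *\<^sub>R D" .
      have S1: "Sx p v i (x + real (Suc k) *\<^sub>R D)" "Sx p v j (2 *\<^sub>R v i - (x + real (Suc k) *\<^sub>R D))"
        using QS[OF x(1) kL] by auto
      have I1: "ob_index p v ((ob_map p v ^^ (2 * Suc k)) x) = i" using E Sx_index[OF ij(1) S1(1)] by simp
      have "(ob_map p v ^^ Suc (2 * Suc k)) x = 2 *\<^sub>R v i - (x + real (Suc k) *\<^sub>R D)"
        using E I1 by (simp add: ob_map_def)
      then have "ob_index p v ((ob_map p v ^^ Suc (2 * Suc k)) x) = j" using Sx_index[OF ij(2) S1(2)] by simp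
      then show "(ob_map p v ^^ (2 * Suc k)) x = x + real (Suc k) *\<^sub>R D
        \<and> ob_index p v ((ob_map p v ^^ (2 * Suc k)) x) = i \<and> ob_index p v ((ob_map p v ^^ Suc (2 * Suc k)) x) = j"
        using E I1 by blast
    qed
  qed
  have "\<forall>k\<le>2 * L + 1. ob_index p v ((ob_map p v ^^ k) x) = alt i j k"
  proof (intro allI impI)
    fix k assume k: "k \<le> 2 * L + 1"
    show "ob_index p v ((ob_map p v ^^ k) x) = alt i j k"
    proof (cases "even k")
      case True
      then obtain h where h: "k = 2 * h" by blast
      have "h \<le> L" using k h by simp
      then have "ob_index p v ((ob_map p v ^^ (2 * h)) x) = i" using ind[of h] by blast
      then show ?thesis using h by (simp add: alt_def)
    next
      case False
      then obtain h where h: "k = Suc (2 * h)" by (metis oddE Suc_eq_plus1)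
      have "h \<le> L" using k h by simp
      then have "ob_index p v ((ob_map p v ^^ Suc (2 * h)) x) = j" using ind[of h] by blast
      then show ?thesis using h False unfolding alt_def by simp
    qed
  qed
  then show ?thesis using x(2) by blast
qed


lemma alt_par: "alt i j (l + q) = alt i j (l + q mod 2)"
proof -
  have "(q mod 2 = 0 \<and> even q) \<or> (q mod 2 = 1 \<and> odd q)" by presburger
  then show ?thesis unfolding alt_def by auto
qed

lemma strict_growth: "card (Wc p v n) < card (Wc p v (Suc n))"
proof (rule ccontr)
  assume "\<not> card (Wc p v n) < card (Wc p v (Suc n))"
  then have c: "card (Wc p v (Suc n)) \<le> card (Wc p v n)" by simp
  obtain i j e where ij: "i < p" "j < p" "i \<noteq> j"
    and ei: "\<forall>m<p. m \<noteq> i \<longrightarrow> cross e (v m - v i) < 0"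
    and ej: "\<forall>m<p. m \<noteq> j \<longrightarrow> 0 < cross e (v m - v j)"
    using extremes by blast
  obtain x where r: "ob_regular p v x"
    and st: "\<forall>k\<le>2 * Suc n + 1. ob_index p v ((ob_map p v ^^ k) x) = alt i j k"
    using alt_start[OF ij ei ej, of "Suc n"] by blast
  have all: "ob_index p v ((ob_map p v ^^ k) x) = alt i j k" for k
  proof (induction k rule: less_induct)
    case (less k)
    show ?case
    proof (cases "k \<le> 2 * Suc n + 1")
      case True then show ?thesis using st by blast
    next
      case False
      define q where "q = k - n"
      have kq: "k = n + q" using False unfolding q_def by simp
      let ?y = "(ob_map p v ^^ q) x"
      let ?z = "(ob_map p v ^^ (q mod 2)) x"
      have ry: "ob_regular p v ?y" and rz: "ob_regular p v ?z" using regular_shift[OF r] by auto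
      have sh: "(ob_map p v ^^ l) ((ob_map p v ^^ h) x) = (ob_map p v ^^ (l + h)) x" for l h
        by (simp add: funpow_add)
      have codes: "ob_code p v n ?y = ob_code p v n ?z"
      proof (rule nth_equalityI)
        show "length (ob_code p v n ?y) = length (ob_code p v n ?z)" by (simp add: code_len)
      next
        fix l assume "l < length (ob_code p v n ?y)"
        then have l: "l < n" by (simp add: code_len)
        have "q mod 2 < 2" by simp
        then have lt1: "l + q < k" "l + q mod 2 < k" using l kq False by linarith+
        have "ob_code p v n ?y ! l = alt i j (l + q)" using code_nth[OF l] sh less.IH[OF lt1(1)] by simp
        moreover have "ob_code p v n ?z ! l = alt i j (l + q mod 2)" using code_nth[OF l] sh less.IH[OF lt1(2)] by simp
        ultimately show "ob_code p v n ?y ! l = ob_code p v n ?z ! l" using alt_par by simp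
      qed
      have "ob_index p v ((ob_map p v ^^ n) ?y) = ob_index p v ((ob_map p v ^^ n) ?z)"
        by (rule determ[OF c ry rz codes])
      moreover have "n + q mod 2 < k" using kq False by (simp add: less_le) presburger?
      ultimately have "ob_index p v ((ob_map p v ^^ k) x) = alt i j (n + q mod 2)"
        using sh less.IH kq by (metis)
      then show ?thesis using alt_par kq by simp
    qed
  qed
  show False using no_alt[OF ij r] all by blast
qed

lemma lower_lin: "n \<le> card (Wc p v n)"
proof (induction n)
  case (Suc n) then show ?case using strict_growth[of n] by simp
qed simp


definition cc :: "(nat \<Rightarrow> real \<times> real) \<Rightarrow> nat list \<Rightarrow> real \<times> real" where
  "cc v' w = foldl (\<lambda>c a. 2 *\<^sub>R v' a - c) 0 w"

definition sg :: "nat \<Rightarrow> real" where "sg k = (-1) ^ k"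

definition inU :: "nat \<Rightarrow> (nat \<Rightarrow> real \<times> real) \<Rightarrow> nat list \<Rightarrow> real \<times> real \<Rightarrow> bool" where
  "inU p' v' w y \<longleftrightarrow> (\<forall>k<length w. Sx p' v' (w ! k) (sg k *\<^sub>R y + cc v' (take k w)))"

definition inV :: "nat \<Rightarrow> (nat \<Rightarrow> real \<times> real) \<Rightarrow> nat list \<Rightarrow> real \<times> real \<Rightarrow> bool" where
  "inV p' v' w z \<longleftrightarrow> inU p' v' w (sg (length w) *\<^sub>R (z - cc v' w))"

lemma cc_snoc: "cc v (w @ [a]) = 2 *\<^sub>R v a - cc v w" unfolding cc_def by simp
lemma sg_Suc: "sg (Suc k) = - sg k" unfolding sg_def by simp
lemma sg_sq: "sg k * sg k = 1" unfolding sg_def by (simp add: power_mult_distrib[symmetric])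

lemma map_eq: "ob_map p v y = 2 *\<^sub>R v (ob_index p v y) - y" by (simp add: ob_map_def)

lemma orbit_code: "(ob_map p v ^^ k) x = sg k *\<^sub>R x + cc v (ob_code p v k x)"
proof (induction k)
  case 0 show ?case by (simp add: sg_def cc_def ob_code_def)
next
  case (Suc k)
  have "(ob_map p v ^^ Suc k) x = 2 *\<^sub>R v (ob_index p v ((ob_map p v ^^ k) x)) - (ob_map p v ^^ k) x"
    by (simp add: map_eq)
  also have "\<dots> = sg (Suc k) *\<^sub>R x + cc v (ob_code p v (Suc k) x)"
    unfolding code_Suc cc_snoc by (subst (2) Suc) (simp add: sg_Suc algebra_simps)
  finally show ?case .
qed

lemma take_code: "k \<le> n \<Longrightarrow> take k (ob_code p v n x) = ob_code p v k x"
  unfolding ob_code_def by (simp add: take_map)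

lemma regular_inU: assumes r: "ob_regular p v x" shows "inU p v (ob_code p v n x) x"
  unfolding inU_def
proof (intro allI impI)
  fix k assume k: "k < length (ob_code p v n x)"
  then have kn: "k < n" by (simp add: code_len)
  have "Sx p v (ob_index p v ((ob_map p v ^^ k) x)) ((ob_map p v ^^ k) x)" using regular_orbit[OF r] by blast
  then show "Sx p v (ob_code p v n x ! k) (sg k *\<^sub>R x + cc v (take k (ob_code p v n x)))"
    using code_nth[OF kn] take_code[of k n] kn orbit_code[of k x] by simp
qed

lemma cell_orbit:
  assumes U: "inU p v w y" and wp: "set w \<subseteq> {..<p}"
  shows "k \<le> length w \<Longrightarrow> (ob_map p v ^^ k) y = sg k *\<^sub>R y + cc v (take k w)
     \<and> (k < length w \<longrightarrow> ob_index p v ((ob_map p v ^^ k) y) = w ! k \<and> Sx p v (w ! k) ((ob_map p v ^^ k) y))"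
proof (induction k)
  case 0
  have "Sx p v (w ! 0) y" if "0 < length w" using U that unfolding inU_def by (auto simp: sg_def cc_def)
  moreover have "w ! 0 < p" if "0 < length w" using wp that nth_mem by blast
  ultimately show ?case using Sx_index by (simp add: sg_def cc_def)
next
  case (Suc k)
  then have IH: "(ob_map p v ^^ k) y = sg k *\<^sub>R y + cc v (take k w)" by simp
  have kl: "k < length w" using Suc.prems by simp
  have wk: "w ! k < p" using wp kl nth_mem by blast
  have S: "Sx p v (w ! k) ((ob_map p v ^^ k) y)" using U kl IH unfolding inU_def by simp
  have E: "(ob_map p v ^^ Suc k) y = sg (Suc k) *\<^sub>R y + cc v (take (Suc k) w)"
    using map_Sx[OF wk S] IH kl by (simp add: take_Suc_conv_app_nth cc_snoc sg_Suc algebra_simps)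
  have "Sx p v (w ! Suc k) ((ob_map p v ^^ Suc k) y)" if "Suc k < length w"
    using U that E unfolding inU_def by simp
  moreover have "w ! Suc k < p" if "Suc k < length w" using wp that nth_mem by blast
  ultimately show ?case using E Sx_index by simp
qed

lemma cell_code: assumes "inU p v w y" "set w \<subseteq> {..<p}" shows "ob_code p v (length w) y = w"
proof (rule nth_equalityI)
  show "length (ob_code p v (length w) y) = length w" by (simp add: code_len)
next
  fix k assume "k < length (ob_code p v (length w) y)"
  then have k: "k < length w" by (simp add: code_len)
  then have h: "k \<le> length w" by simp
  have "k < length w \<longrightarrow> ob_index p v ((ob_map p v ^^ k) y) = w ! k \<and> Sx p v (w ! k) ((ob_map p v ^^ k) y)"
    using cell_orbit[OF assms h] by (rule conjunct2)
  then have "ob_index p v ((ob_map p v ^^ k) y) = w ! k" using k by blast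
  then show "ob_code p v (length w) y ! k = w ! k" using code_nth[OF k] by simp
qed

lemma inV_I: "inU p v w y \<Longrightarrow> inV p v w (sg (length w) *\<^sub>R y + cc v w)"
  unfolding inV_def by (simp add: sg_sq)

lemma inV_E: "inV p v w z \<Longrightarrow> \<exists>y. inU p v w y \<and> z = sg (length w) *\<^sub>R y + cc v w"
  unfolding inV_def by (intro exI[of _ "sg (length w) *\<^sub>R (z - cc v w)"]) (simp add: sg_sq)

lemma orbit_inj:
  "(\<forall>l<n. ob_index p v ((ob_map p v ^^ l) y) < p \<and> Sx p v (ob_index p v ((ob_map p v ^^ l) y)) ((ob_map p v ^^ l) y))
   \<Longrightarrow> (\<forall>l<n. ob_index p v ((ob_map p v ^^ l) y') < p \<and> Sx p v (ob_index p v ((ob_map p v ^^ l) y')) ((ob_map p v ^^ l) y'))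
   \<Longrightarrow> (ob_map p v ^^ n) y = (ob_map p v ^^ n) y' \<Longrightarrow> y = y'"
proof (induction n arbitrary: y y')
  case 0 then show ?case by simp
next
  case (Suc n)
  have sh: "(ob_map p v ^^ l) (ob_map p v z) = (ob_map p v ^^ Suc l) z" for l z
    by (simp only: funpow_Suc_right comp_def)
  have "ob_map p v y = ob_map p v y'"
  proof (rule Suc.IH)
    show "\<forall>l<n. ob_index p v ((ob_map p v ^^ l) (ob_map p v y)) < p \<and>
      Sx p v (ob_index p v ((ob_map p v ^^ l) (ob_map p v y))) ((ob_map p v ^^ l) (ob_map p v y))"
      using Suc.prems(1) unfolding sh by auto
    show "\<forall>l<n. ob_index p v ((ob_map p v ^^ l) (ob_map p v y')) < p \<and>
      Sx p v (ob_index p v ((ob_map p v ^^ l) (ob_map p v y'))) ((ob_map p v ^^ l) (ob_map p v y'))"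
      using Suc.prems(2) unfolding sh by auto
    show "(ob_map p v ^^ n) (ob_map p v y) = (ob_map p v ^^ n) (ob_map p v y')"
      using Suc.prems(3) unfolding sh by simp
  qed
  moreover have "ob_index p v y < p" "Sx p v (ob_index p v y) y"
    "ob_index p v y' < p" "Sx p v (ob_index p v y') y'"
    using Suc.prems(1)[rule_format, of 0] Suc.prems(2)[rule_format, of 0] by auto
  ultimately have "ob_index p v y = ob_index p v y'" using Sx_inj unfolding ob_map_def by metis
  then show ?case using \<open>ob_map p v y = ob_map p v y'\<close> unfolding ob_map_def by simp
qed

lemma V_disj:
  assumes "w \<in> Wc p v n" "w' \<in> Wc p v n" "inV p v w z" "inV p v w' z"
  shows "w = w'"
proof -
  have wp: "set w \<subseteq> {..<p}" "length w = n" using assms(1) code_set code_len by (auto elim!: Wc_E)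
  have wp': "set w' \<subseteq> {..<p}" "length w' = n" using assms(2) code_set code_len by (auto elim!: Wc_E)
  obtain y where y: "inU p v w y" "z = sg n *\<^sub>R y + cc v w" using inV_E[OF assms(3)] wp by auto
  obtain y' where y': "inU p v w' y'" "z = sg n *\<^sub>R y' + cc v w'" using inV_E[OF assms(4)] wp' by auto
  have A: "\<forall>l<n. ob_index p v ((ob_map p v ^^ l) y) < p \<and> Sx p v (ob_index p v ((ob_map p v ^^ l) y)) ((ob_map p v ^^ l) y)"
  proof (intro allI impI)
    fix l assume l: "l < n"
    have "ob_index p v ((ob_map p v ^^ l) y) = w ! l \<and> Sx p v (w ! l) ((ob_map p v ^^ l) y)"
      using cell_orbit[OF y(1) wp(1), of l] l wp(2) by auto
    moreover have "w ! l < p" using wp l nth_mem by blast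
    ultimately show "ob_index p v ((ob_map p v ^^ l) y) < p \<and> Sx p v (ob_index p v ((ob_map p v ^^ l) y)) ((ob_map p v ^^ l) y)"
      by simp
  qed
  have B: "\<forall>l<n. ob_index p v ((ob_map p v ^^ l) y') < p \<and> Sx p v (ob_index p v ((ob_map p v ^^ l) y')) ((ob_map p v ^^ l) y')"
  proof (intro allI impI)
    fix l assume l: "l < n"
    have "ob_index p v ((ob_map p v ^^ l) y') = w' ! l \<and> Sx p v (w' ! l) ((ob_map p v ^^ l) y')"
      using cell_orbit[OF y'(1) wp'(1), of l] l wp'(2) by auto
    moreover have "w' ! l < p" using wp' l nth_mem by blast
    ultimately show "ob_index p v ((ob_map p v ^^ l) y') < p \<and> Sx p v (ob_index p v ((ob_map p v ^^ l) y')) ((ob_map p v ^^ l) y')"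
      by simp
  qed
  have "(ob_map p v ^^ n) y = z" using cell_orbit[OF y(1) wp(1), of n] wp y(2) by simp
  moreover have "(ob_map p v ^^ n) y' = z" using cell_orbit[OF y'(1) wp'(1), of n] wp' y'(2) by simp
  ultimately have "y = y'" using orbit_inj[OF A B] by simp
  then show ?thesis using cell_code[OF y(1) wp(1)] cell_code[OF y'(1) wp'(1)] wp wp' by simp
qed


lemma inV_alt: "inV p v w z \<longleftrightarrow> (\<forall>k<length w. Sx p v (w ! k)
   ((sg k * sg (length w)) *\<^sub>R z + (cc v (take k w) - (sg k * sg (length w)) *\<^sub>R cc v w)))"
proof -
  have "sg k *\<^sub>R (sg (length w) *\<^sub>R (z - cc v w)) + cc v (take k w)
     = (sg k * sg (length w)) *\<^sub>R z + (cc v (take k w) - (sg k * sg (length w)) *\<^sub>R cc v w)" for k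
    by (simp add: algebra_simps)
  then show ?thesis by (simp only: inV_def inU_def)
qed

lemma Sx_convex:
  assumes a: "Sx p v i a" and b: "Sx p v i b" and u: "0 \<le> u" "u \<le> 1"
  shows "Sx p v i ((1 - u) *\<^sub>R a + u *\<^sub>R b)"
  unfolding Sx_def
proof (intro allI impI)
  fix m assume m: "m < p" "m \<noteq> i"
  have A: "0 < cross (v i - a) (v m - a)" and B: "0 < cross (v i - b) (v m - b)"
    using a b m unfolding Sx_def by auto
  have e: "cross (v i - ((1 - u) *\<^sub>R a + u *\<^sub>R b)) (v m - ((1 - u) *\<^sub>R a + u *\<^sub>R b))
    = (1 - u) * cross (v i - a) (v m - a) + u * cross (v i - b) (v m - b)"
    by (simp add: cross_def algebra_simps)
  show "0 < cross (v i - ((1 - u) *\<^sub>R a + u *\<^sub>R b)) (v m - ((1 - u) *\<^sub>R a + u *\<^sub>R b))"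
  proof (cases "u = 0")
    case True then show ?thesis using A e by simp
  next
    case False
    then have "0 < u * cross (v i - b) (v m - b)" using u B by simp
    moreover have "0 \<le> (1 - u) * cross (v i - a) (v m - a)" using u A by simp
    ultimately show ?thesis using e by linarith
  qed
qed

lemma V_convex:
  assumes "inV p v w z1" "inV p v w z2" "0 \<le> u" "u \<le> 1"
  shows "inV p v w ((1 - u) *\<^sub>R z1 + u *\<^sub>R z2)"
  unfolding inV_alt
proof (intro allI impI)
  fix k assume k: "k < length w"
  let ?s = "sg k * sg (length w)" and ?c = "cc v (take k w) - (sg k * sg (length w)) *\<^sub>R cc v w"
  have "?s *\<^sub>R ((1 - u) *\<^sub>R z1 + u *\<^sub>R z2) + ?c = (1 - u) *\<^sub>R (?s *\<^sub>R z1 + ?c) + u *\<^sub>R (?s *\<^sub>R z2 + ?c)"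
    by (simp add: algebra_simps)
  moreover have "Sx p v (w ! k) ((1 - u) *\<^sub>R (?s *\<^sub>R z1 + ?c) + u *\<^sub>R (?s *\<^sub>R z2 + ?c))"
    using assms k unfolding inV_alt by (intro Sx_convex) auto
  ultimately show "Sx p v (w ! k) (?s *\<^sub>R ((1 - u) *\<^sub>R z1 + u *\<^sub>R z2) + ?c)" by simp
qed

lemma V_open: "open {z. inV p v w z}"
proof -
  have "{z. inV p v w z} = {z. \<forall>k\<in>{..<length w}. \<forall>m\<in>{..<p}. m \<noteq> w ! k \<longrightarrow>
     0 < cross (v (w ! k) - ((sg k * sg (length w)) *\<^sub>R z + (cc v (take k w) - (sg k * sg (length w)) *\<^sub>R cc v w)))
               (v m - ((sg k * sg (length w)) *\<^sub>R z + (cc v (take k w) - (sg k * sg (length w)) *\<^sub>R cc v w)))}"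
    unfolding inV_alt Sx_def by auto
  also have "open \<dots>"
    by (intro open_fin_all finite_lessThan open_imp_pos cont_cross)
  finally show ?thesis .
qed

lemma V_notin:
  assumes n: "length w = Suc n" and wp: "set w \<subseteq> {..<p}" and V: "inV p v w z"
  shows "z \<notin> polygon p v"
proof -
  obtain y where y: "inU p v w y" "z = sg (length w) *\<^sub>R y + cc v w" using inV_E[OF V] by blast
  have h1: "(ob_map p v ^^ n) y = sg n *\<^sub>R y + cc v (take n w) \<and>
    (n < length w \<longrightarrow> ob_index p v ((ob_map p v ^^ n) y) = w ! n \<and> Sx p v (w ! n) ((ob_map p v ^^ n) y))"
    by (rule cell_orbit[OF y(1) wp]) (simp add: n)
  have h2: "(ob_map p v ^^ Suc n) y = sg (Suc n) *\<^sub>R y + cc v (take (Suc n) w)"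
    using cell_orbit[OF y(1) wp, of "Suc n"] n by simp
  have "n < length w" using n by simp
  then have S: "Sx p v (w ! n) ((ob_map p v ^^ n) y)" using h1 by blast
  have wn: "w ! n < p" using wp n nth_mem by (metis lessI lessThan_iff subsetD)
  have "z = (ob_map p v ^^ Suc n) y" using h2 y(2) n by simp
  also have "\<dots> = 2 *\<^sub>R v (w ! n) - (ob_map p v ^^ n) y" using map_Sx[OF wn S] by simp
  finally show ?thesis using Sx_refl_notin[OF wn S] by simp
qed

definition Hk :: "nat \<Rightarrow> (nat \<Rightarrow> real \<times> real) \<Rightarrow> nat \<Rightarrow> (real \<times> real) set" where
  "Hk p' v' k = {z. \<forall>m\<in>{..<p'}. 0 \<le> cross (v' k - z) (v' m - z)}"

lemma Hk_closed: "closed (Hk p v k)"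
proof -
  have "Hk p v k = (\<Inter>m\<in>{..<p}. {z. 0 \<le> cross (v k - z) (v m - z)})" unfolding Hk_def by auto
  also have "closed \<dots>"
    by (intro closed_INT ballI closed_Collect_le continuous_on_const) (unfold cross_def, intro continuous_intros)
  finally show ?thesis .
qed

lemma ray_meet:
  assumes n: "n \<ge> 1" and x: "ob_regular p v x" and y: "ob_regular p v y"
    and cx: "ob_code p v n x = w" and cy: "ob_code p v n y = w"
    and d: "ob_index p v ((ob_map p v ^^ n) x) \<noteq> ob_index p v ((ob_map p v ^^ n) y)"
  shows "\<exists>j<p. \<exists>t\<ge>0. inV p v w (v j + t *\<^sub>R (v j - v (Suc j mod p)))"
proof -
  have lw: "length w = n" unfolding cx[symmetric] by (rule code_len)
  have wp: "set w \<subseteq> {..<p}" using cx code_set[OF x] by auto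
  let ?a = "(ob_map p v ^^ n) x" and ?b = "(ob_map p v ^^ n) y"
  have Va: "inV p v w ?a" using inV_I[OF regular_inU[OF x, of n]] orbit_code[of n x] cx lw by simp
  have Vb: "inV p v w ?b" using inV_I[OF regular_inU[OF y, of n]] orbit_code[of n y] cy lw by simp
  define i where "i = ob_index p v ?a"
  define j where "j = ob_index p v ?b"
  have i: "i < p" "Sx p v i ?a" using regular_orbit[OF x, of n] unfolding i_def by auto
  have j: "j < p" "Sx p v j ?b" using regular_orbit[OF y, of n] unfolding j_def by auto
  have ij: "i \<noteq> j" using d unfolding i_def j_def .
  let ?S = "closed_segment ?a ?b"
  have segV: "inV p v w z" if "z \<in> ?S" for z
    using that V_convex[OF Va Vb] unfolding closed_segment_def by auto
  obtain n' where n': "length w = Suc n'" using lw n by (cases n) auto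
  have segP: "z \<notin> polygon p v" if "z \<in> ?S" for z using V_notin[OF n' wp segV[OF that]] .
  let ?A = "Hk p v i"
  let ?B = "\<Union>k\<in>{..<p} - {i}. Hk p v k"
  have cA: "closed ?A" by (rule Hk_closed)
  have cB: "closed ?B" by (intro closed_UN finite_Diff finite_lessThan ballI Hk_closed)
  have cov: "?S \<subseteq> ?A \<union> ?B"
  proof
    fix z assume z: "z \<in> ?S"
    obtain k where k: "k < p" "z \<in> ob_region p v k" using region_ex[OF segP[OF z]] by blast
    then have "z \<in> Hk p v k" unfolding ob_region_def Hk_def by auto
    then show "z \<in> ?A \<union> ?B" using k by (cases "k = i") auto
  qed
  have "?a \<in> ?A \<inter> ?S" using Sx_region[OF i] unfolding ob_region_def Hk_def by auto
  moreover have "?b \<in> ?B \<inter> ?S" using Sx_region[OF j] ij j(1) unfolding ob_region_def Hk_def by auto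
  ultimately have "?A \<inter> ?B \<inter> ?S \<noteq> {}"
    using connected_closedD[OF connected_segment _ cov cA cB] by blast
  then obtain z k where z: "z \<in> ?S" "z \<in> Hk p v i" "k < p" "k \<noteq> i" "z \<in> Hk p v k" by blast
  have zr: "z \<in> ob_region p v i" using z(2) segP[OF z(1)] unfolding ob_region_def Hk_def by auto
  have "0 \<le> cross (v i - z) (v k - z)" "0 \<le> cross (v k - z) (v i - z)"
    using z i(1) unfolding Hk_def by auto
  then have "cross (v i - z) (v k - z) = 0" using cross_anti[of "v i - z" "v k - z"] by linarith
  then have "z \<in> ob_rays p v" using key_ray[OF i(1) zr z(3) z(4)] by blast
  then obtain j' t where "j' < p" "t \<ge> 0" "z = v j' + t *\<^sub>R (v j' - v (Suc j' mod p))"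
    unfolding ob_rays_def ob_ray_def by blast
  then show ?thesis using segV[OF z(1)] by blast
qed


lemma cc_comb:
  assumes "set w \<subseteq> {..<p}"
  shows "\<exists>\<gamma>::nat \<Rightarrow> int. (\<forall>q. \<bar>\<gamma> q\<bar> \<le> 2 * int (length w)) \<and> cc v w = (\<Sum>q<p. of_int (\<gamma> q) *\<^sub>R v q)"
  using assms
proof (induction w rule: rev_induct)
  case Nil
  show ?case by (intro exI[of _ "\<lambda>_. 0"]) (simp add: cc_def)
next
  case (snoc a w)
  then obtain \<gamma> where g: "\<forall>q. \<bar>\<gamma> q\<bar> \<le> 2 * int (length w)" "cc v w = (\<Sum>q<p. of_int (\<gamma> q) *\<^sub>R v q)" by auto
  have a: "a < p" using snoc.prems by auto
  define \<gamma>' where "\<gamma>' q = (if q = a then 2 else 0) - \<gamma> q" for q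
  have b: "\<forall>q. \<bar>\<gamma>' q\<bar> \<le> 2 * int (length (w @ [a]))"
  proof
    fix q show "\<bar>\<gamma>' q\<bar> \<le> 2 * int (length (w @ [a]))" using g(1)[rule_format, of q] unfolding \<gamma>'_def by auto
  qed
  have "(\<Sum>q<p. of_int (\<gamma>' q) *\<^sub>R v q) = (\<Sum>q<p. (if q = a then 2 *\<^sub>R v q else 0) - of_int (\<gamma> q) *\<^sub>R v q)"
    unfolding \<gamma>'_def by (rule sum.cong) (auto simp: algebra_simps)
  also have "\<dots> = 2 *\<^sub>R v a - cc v w" using a g(2) by (simp add: sum_subtractf)
  also have "\<dots> = cc v (w @ [a])" by (simp add: cc_snoc)
  finally show ?case using b by metis
qed

definition Gm :: "nat \<Rightarrow> (nat \<Rightarrow> real \<times> real) \<Rightarrow> int \<Rightarrow> (real \<times> real) set" where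
  "Gm p' v' N = (\<lambda>\<gamma>. \<Sum>q<p'. of_int (\<gamma> q) *\<^sub>R v' q) ` (PiE {..<p'} (\<lambda>_. {-N..N}))"

lemma Gm_finite: "finite (Gm p v N)"
  unfolding Gm_def by (intro finite_imageI finite_PiE) auto

lemma Gm_card: "N \<ge> 0 \<Longrightarrow> card (Gm p v N) \<le> nat (2 * N + 1) ^ p"
proof -
  assume N: "N \<ge> 0"
  have "card (Gm p v N) \<le> card (PiE {..<p} (\<lambda>_. {-N..N}))" unfolding Gm_def
    by (rule card_image_le) (intro finite_PiE; simp)
  also have "\<dots> = nat (2 * N + 1) ^ p" by (simp add: card_PiE)
  finally show ?thesis .
qed

lemma Gm_mem:
  assumes "\<forall>q. \<bar>\<gamma> q\<bar> \<le> N"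
  shows "(\<Sum>q<p. of_int (\<gamma> q) *\<^sub>R v q) \<in> Gm p v N"
proof -
  have "-N \<le> \<gamma> q \<and> \<gamma> q \<le> N" for q using assms[rule_format, of q] by arith
  then have "restrict \<gamma> {..<p} \<in> PiE {..<p} (\<lambda>_. {-N..N})" by auto
  moreover have "(\<Sum>q<p. of_int (\<gamma> q) *\<^sub>R v q) = (\<Sum>q<p. of_int (restrict \<gamma> {..<p} q) *\<^sub>R v q)"
    by (rule sum.cong) auto
  ultimately show ?thesis unfolding Gm_def by blast
qed

lemma sg_pm: "sg k * sg n \<in> {1, -1}"
  unfolding sg_def by (cases "even (k + n)") (auto simp: power_add[symmetric])

lemma cprime_mem:
  assumes wp: "set w \<subseteq> {..<p}" and k: "k < length w"
  shows "cc v (take k w) - (sg k * sg (length w)) *\<^sub>R cc v w \<in> Gm p v (int (4 * length w))"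
proof -
  have tp: "set (take k w) \<subseteq> {..<p}" using wp by (meson order_trans set_take_subset)
  obtain g1 where g1: "\<forall>q. \<bar>g1 q\<bar> \<le> 2 * int (length (take k w))" "cc v (take k w) = (\<Sum>q<p. of_int (g1 q) *\<^sub>R v q)"
    using cc_comb[OF tp] by blast
  obtain g2 where g2: "\<forall>q. \<bar>g2 q\<bar> \<le> 2 * int (length w)" "cc v w = (\<Sum>q<p. of_int (g2 q) *\<^sub>R v q)"
    using cc_comb[OF wp] by blast
  define si :: int where "si = (-1) ^ (k + length w)"
  have sis: "sg k * sg (length w) = of_int si" unfolding sg_def si_def by (simp add: power_add)
  have sia: "\<bar>si\<bar> = 1" unfolding si_def by (simp add: power_abs)
  define g where "g q = g1 q - si * g2 q" for q
  have gb: "\<forall>q. \<bar>g q\<bar> \<le> int (4 * length w)"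
  proof
    fix q
    have "\<bar>g q\<bar> \<le> \<bar>g1 q\<bar> + \<bar>si * g2 q\<bar>" unfolding g_def by (rule abs_triangle_ineq4)
    also have "\<bar>si * g2 q\<bar> = \<bar>g2 q\<bar>" using sia by (simp add: abs_mult)
    finally show "\<bar>g q\<bar> \<le> int (4 * length w)" using g1(1)[rule_format, of q] g2(1)[rule_format, of q] k by simp
  qed
  have "cc v (take k w) - (sg k * sg (length w)) *\<^sub>R cc v w = (\<Sum>q<p. of_int (g q) *\<^sub>R v q)"
    unfolding g1(2) g2(2) sis g_def by (simp add: scaleR_sum_right sum_subtractf algebra_simps)
  then show ?thesis using Gm_mem[OF gb] by simp
qed

definition rootf :: "nat \<Rightarrow> (nat \<Rightarrow> real \<times> real) \<Rightarrow> nat \<Rightarrow> nat \<Rightarrow> nat \<Rightarrow> real \<Rightarrow> real \<times> real \<Rightarrow> real" where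
  "rootf p' v' j a m \<sigma> c = cross (v' a - \<sigma> *\<^sub>R v' j - c) (v' m - v' a) / (\<sigma> * cross (v' j - v' (Suc j mod p')) (v' m - v' a))"

definition Roots :: "nat \<Rightarrow> (nat \<Rightarrow> real \<times> real) \<Rightarrow> nat \<Rightarrow> nat \<Rightarrow> real set" where
  "Roots p' v' j n = (\<lambda>(a, m, \<sigma>, c). rootf p' v' j a m \<sigma> c) ` ({..<p'} \<times> {..<p'} \<times> {1, -1} \<times> Gm p' v' (int (4 * n)))"

lemma Roots_finite: "finite (Roots p v j n)"
  unfolding Roots_def using Gm_finite by auto

lemma Roots_card: "card (Roots p v j n) \<le> p * p * 2 * (8 * n + 1) ^ p"
proof -
  have "card (Roots p v j n) \<le> card ({..<p} \<times> {..<p} \<times> {1::real, -1} \<times> Gm p v (int (4 * n)))"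
    unfolding Roots_def by (rule card_image_le) (use Gm_finite in auto)
  also have "\<dots> = p * p * 2 * card (Gm p v (int (4 * n)))" by (simp add: card_cartesian_product)
  also have "card (Gm p v (int (4 * n))) \<le> nat (2 * int (4 * n) + 1) ^ p" by (rule Gm_card) simp
  also have "nat (2 * int (4 * n) + 1) = 8 * n + 1" by simp
  finally show ?thesis by simp
qed


lemma inf_root:
  fixes I :: "real set" and \<alpha> \<beta> :: real
  assumes ne: "I \<noteq> {}" and bdd: "bdd_below I" and pos: "\<forall>t\<in>I. 0 < \<alpha> - t * \<beta>"
    and np: "\<not> 0 < \<alpha> - Inf I * \<beta>"
  shows "\<beta> \<noteq> 0 \<and> Inf I = \<alpha> / \<beta>"
proof -
  let ?s = "Inf I"
  obtain t0 where t0: "t0 \<in> I" using ne by blast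
  have lb: "?s \<le> t" if "t \<in> I" for t using cInf_lower[OF that bdd] .
  have "\<beta> \<noteq> 0"
  proof
    assume "\<beta> = 0"
    then show False using pos t0 np by auto
  qed
  moreover have "\<alpha> - ?s * \<beta> = 0"
  proof (rule ccontr)
    assume "\<alpha> - ?s * \<beta> \<noteq> 0"
    then have neg: "\<alpha> - ?s * \<beta> < 0" using np by simp
    define \<delta> where "\<delta> = - (\<alpha> - ?s * \<beta>) / (\<bar>\<beta>\<bar> + 1)"
    have dpos: "\<delta> > 0" unfolding \<delta>_def using neg by (simp add: divide_pos_pos add_pos_nonneg)
    have dd: "\<delta> * (\<bar>\<beta>\<bar> + 1) = - (\<alpha> - ?s * \<beta>)" unfolding \<delta>_def
      by (simp add: add_pos_nonneg)
    obtain t where t: "t \<in> I" "t < ?s + \<delta>" using cInf_less_iff[OF ne bdd, of "?s + \<delta>"] dpos by auto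
    have ts: "0 \<le> t - ?s" "t - ?s < \<delta>" using lb[OF t(1)] t(2) by auto
    have "- ((t - ?s) * \<beta>) \<le> (t - ?s) * \<bar>\<beta>\<bar>"
      using ts(1) by (metis abs_ge_minus_self abs_mult abs_of_nonneg mult.commute)
    also have "\<dots> \<le> \<delta> * \<bar>\<beta>\<bar>" using ts by (intro mult_right_mono) auto
    also have "\<dots> < \<delta> * (\<bar>\<beta>\<bar> + 1)" using dpos by simp
    finally have "\<alpha> - t * \<beta> < 0" using dd by (simp add: algebra_simps)
    then show False using pos t(1) by auto
  qed
  ultimately show ?thesis by (simp add: field_simps)
qed

definition Rr :: "nat \<Rightarrow> (nat \<Rightarrow> real \<times> real) \<Rightarrow> nat \<Rightarrow> real \<Rightarrow> real \<times> real" where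
  "Rr p' v' j t = v' j + t *\<^sub>R (v' j - v' (Suc j mod p'))"

definition Iw :: "nat \<Rightarrow> (nat \<Rightarrow> real \<times> real) \<Rightarrow> nat \<Rightarrow> nat list \<Rightarrow> real set" where
  "Iw p' v' j w = {t. 0 \<le> t \<and> inV p' v' w (Rr p' v' j t)}"

lemma Iw_interval:
  assumes "t1 \<in> Iw p v j w" "t2 \<in> Iw p v j w" "t1 \<le> t" "t \<le> t2"
  shows "t \<in> Iw p v j w"
proof (cases "t1 = t2")
  case True then show ?thesis using assms by simp
next
  case False
  then have lt: "t1 < t2" using assms by simp
  define u where "u = (t - t1) / (t2 - t1)"
  have u: "0 \<le> u" "u \<le> 1" unfolding u_def using assms lt by (auto simp: divide_le_eq)
  have "u * (t2 - t1) = t - t1" unfolding u_def using lt by simp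
  then have tu: "(1 - u) * t1 + u * t2 = t" by (simp add: algebra_simps)
  have "Rr p v j t = (1 - u) *\<^sub>R Rr p v j t1 + u *\<^sub>R Rr p v j t2"
    unfolding Rr_def tu[symmetric] by (simp add: algebra_simps)
  then have "inV p v w (Rr p v j t)" using V_convex[OF _ _ u] assms unfolding Iw_def by auto
  then show ?thesis using assms unfolding Iw_def by auto
qed

lemma Iw_open:
  assumes "t \<in> Iw p v j w"
  obtains \<epsilon> where "\<epsilon> > 0" "\<And>t'. 0 \<le> t' \<Longrightarrow> \<bar>t' - t\<bar> < \<epsilon> \<Longrightarrow> t' \<in> Iw p v j w"
proof -
  have op: "open (Rr p v j -` {z. inV p v w z})"
    by (rule continuous_open_vimage[OF V_open]) (unfold Rr_def, intro continuous_intros)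
  have "t \<in> Rr p v j -` {z. inV p v w z}" using assms unfolding Iw_def by auto
  then obtain \<epsilon> where e: "\<epsilon> > 0" "ball t \<epsilon> \<subseteq> Rr p v j -` {z. inV p v w z}" using openE[OF op] by blast
  show ?thesis
  proof (rule that[OF e(1)])
    fix t' assume t': "0 \<le> t'" "\<bar>t' - t\<bar> < \<epsilon>"
    then have "t' \<in> ball t \<epsilon>" unfolding ball_def dist_real_def by (simp add: abs_minus_commute)
    then show "t' \<in> Iw p v j w" using e(2) t'(1) unfolding Iw_def by auto
  qed
qed

lemma Iw_above:
  assumes "t \<in> Iw p v j w" shows "\<exists>t'\<in>Iw p v j w. t < t'"
proof -
  obtain \<epsilon> where e: "\<epsilon> > 0" "\<And>t'. 0 \<le> t' \<Longrightarrow> \<bar>t' - t\<bar> < \<epsilon> \<Longrightarrow> t' \<in> Iw p v j w"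
    using Iw_open[OF assms] by blast
  have "0 \<le> t" using assms unfolding Iw_def by auto
  then have "t + \<epsilon> / 2 \<in> Iw p v j w" using e by (intro e(2)) auto
  then show ?thesis using e(1) by (intro bexI[of _ "t + \<epsilon> / 2"]) auto
qed

lemma Iw_below:
  assumes "t \<in> Iw p v j w" "0 < t" shows "\<exists>t'\<in>Iw p v j w. t' < t"
proof -
  obtain \<epsilon> where e: "\<epsilon> > 0" "\<And>t'. 0 \<le> t' \<Longrightarrow> \<bar>t' - t\<bar> < \<epsilon> \<Longrightarrow> t' \<in> Iw p v j w"
    using Iw_open[OF assms(1)] by blast
  define t' where "t' = t - min \<epsilon> t / 2"
  have "0 < min \<epsilon> t" using e(1) assms(2) by simp
  then have "0 \<le> t'" "\<bar>t' - t\<bar> < \<epsilon>" "t' < t" unfolding t'_def by (auto simp: min_def split: if_splits)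
  then show ?thesis using e(2) by blast
qed

lemma Iw_bdd: "bdd_below (Iw p v j w)"
  unfolding Iw_def by (rule bdd_belowI[of _ 0]) auto

lemma inf_in_roots:
  assumes j: "j < p" and w: "w \<in> Wc p v n" and ne: "Iw p v j w \<noteq> {}"
  shows "Inf (Iw p v j w) \<in> insert 0 (Roots p v j n)"
proof -
  let ?I = "Iw p v j w" and ?s = "Inf (Iw p v j w)"
  have wp: "set w \<subseteq> {..<p}" "length w = n" using w code_set code_len by (auto elim!: Wc_E)
  have s0: "0 \<le> ?s" by (rule cInf_greatest[OF ne]) (auto simp: Iw_def)
  show ?thesis
  proof (cases "?s \<in> ?I")
    case True
    show ?thesis
    proof (cases "?s = 0")
      case False
      then have "0 < ?s" using s0 by simp
      then obtain t' where "t' \<in> ?I" "t' < ?s" using Iw_below[OF True] by blast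
      then show ?thesis using cInf_lower[OF _ Iw_bdd] by force
    qed simp
  next
    case False
    then have "\<not> inV p v w (Rr p v j ?s)" using s0 unfolding Iw_def by auto
    then obtain k where k: "k < length w"
      and nS: "\<not> Sx p v (w ! k) ((sg k * sg (length w)) *\<^sub>R Rr p v j ?s + (cc v (take k w) - (sg k * sg (length w)) *\<^sub>R cc v w))"
      unfolding inV_alt by blast
    define \<sigma> where "\<sigma> = sg k * sg (length w)"
    define c where "c = cc v (take k w) - (sg k * sg (length w)) *\<^sub>R cc v w"
    define a where "a = w ! k"
    have a: "a < p" using wp k nth_mem unfolding a_def by blast
    obtain m where m: "m < p" "m \<noteq> a" and nm: "\<not> 0 < cross (v a - (\<sigma> *\<^sub>R Rr p v j ?s + c)) (v m - (\<sigma> *\<^sub>R Rr p v j ?s + c))"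
      using nS unfolding Sx_def \<sigma>_def c_def a_def by blast
    define \<alpha> where "\<alpha> = cross (v a - \<sigma> *\<^sub>R v j - c) (v m - v a)"
    define \<beta> where "\<beta> = \<sigma> * cross (v j - v (Suc j mod p)) (v m - v a)"
    have id: "cross (v a - (\<sigma> *\<^sub>R Rr p v j t + c)) (v m - (\<sigma> *\<^sub>R Rr p v j t + c)) = \<alpha> - t * \<beta>" for t
      unfolding \<alpha>_def \<beta>_def Rr_def by (simp add: cross_def algebra_simps)
    have pos: "\<forall>t\<in>?I. 0 < \<alpha> - t * \<beta>"
    proof
      fix t assume "t \<in> ?I"
      then have "inV p v w (Rr p v j t)" unfolding Iw_def by auto
      then have "Sx p v a (\<sigma> *\<^sub>R Rr p v j t + c)" using k unfolding inV_alt \<sigma>_def c_def a_def by blast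
      then show "0 < \<alpha> - t * \<beta>" using m id[of t] unfolding Sx_def by auto
    qed
    have "\<beta> \<noteq> 0 \<and> ?s = \<alpha> / \<beta>" by (rule inf_root[OF ne Iw_bdd pos]) (use nm id in simp)
    then have "?s = rootf p v j a m \<sigma> c" unfolding rootf_def \<alpha>_def \<beta>_def by simp
    moreover have "\<sigma> \<in> {1, -1}" unfolding \<sigma>_def by (rule sg_pm)
    moreover have "c \<in> Gm p v (int (4 * n))" unfolding c_def using cprime_mem[OF wp(1) k] wp(2) by simp
    ultimately have "?s \<in> Roots p v j n" unfolding Roots_def using a m(1) by force
    then show ?thesis by simp
  qed
qed

lemma ray_count:
  assumes j: "j < p"
  shows "card {w \<in> Wc p v n. Iw p v j w \<noteq> {}} \<le> card (Roots p v j n) + 1"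
proof -
  let ?W = "{w \<in> Wc p v n. Iw p v j w \<noteq> {}}"
  let ?s = "\<lambda>w. Inf (Iw p v j w)"
  have above: "\<exists>t\<in>Iw p v j w. ?s w < t" if wW: "w \<in> ?W" for w
  proof -
    obtain t0 where t0: "t0 \<in> Iw p v j w" using wW by auto
    have "?s w \<le> t0" using cInf_lower[OF t0 Iw_bdd] .
    show ?thesis
    proof (cases "?s w < t0")
      case True then show ?thesis using t0 by blast
    next
      case False
      then have "t0 = ?s w" using \<open>?s w \<le> t0\<close> by simp
      then show ?thesis using Iw_above[OF t0] by auto
    qed
  qed
  have inj: "inj_on ?s ?W"
  proof (rule inj_onI)
    fix w1 w2 assume w1: "w1 \<in> ?W" and w2: "w2 \<in> ?W" and eq: "?s w1 = ?s w2"
    obtain t1 where t1: "t1 \<in> Iw p v j w1" "?s w1 < t1" using above[OF w1] by blast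
    obtain t2 where t2: "t2 \<in> Iw p v j w2" "?s w2 < t2" using above[OF w2] by blast
    define t where "t = min t1 t2"
    have in1: "t \<in> Iw p v j w1"
    proof -
      have "?s w1 < t" using t1 t2 eq unfolding t_def by simp
      then obtain t0 where "t0 \<in> Iw p v j w1" "t0 < t"
        using cInf_less_iff[OF _ Iw_bdd] w1 by blast
      then show ?thesis using Iw_interval[OF _ t1(1), of t0 t] unfolding t_def by simp
    qed
    have in2: "t \<in> Iw p v j w2"
    proof -
      have "?s w2 < t" using t1 t2 eq unfolding t_def by simp
      then obtain t0 where "t0 \<in> Iw p v j w2" "t0 < t"
        using cInf_less_iff[OF _ Iw_bdd] w2 by blast
      then show ?thesis using Iw_interval[OF _ t2(1), of t0 t] unfolding t_def by simp
    qed
    show "w1 = w2" using V_disj[of w1 n w2 "Rr p v j t"] w1 w2 in1 in2 unfolding Iw_def by auto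
  qed
  have "card ?W = card (?s ` ?W)" using card_image[OF inj] by simp
  also have "\<dots> \<le> card (insert 0 (Roots p v j n))"
  proof (rule card_mono)
    show "finite (insert 0 (Roots p v j n))" using Roots_finite by simp
    show "?s ` ?W \<subseteq> insert 0 (Roots p v j n)"
    proof
      fix x assume "x \<in> ?s ` ?W"
      then obtain w where "w \<in> Wc p v n" "Iw p v j w \<noteq> {}" "x = ?s w" by blast
      then show "x \<in> insert 0 (Roots p v j n)" using inf_in_roots[OF j] by blast
    qed
  qed
  also have "\<dots> \<le> card (Roots p v j n) + 1" by (simp add: card_insert_if Roots_finite)
  finally show ?thesis .
qed


definition spl :: "nat \<Rightarrow> (nat \<Rightarrow> real \<times> real) \<Rightarrow> nat \<Rightarrow> nat list \<Rightarrow> bool" where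
  "spl p' v' n w \<longleftrightarrow> (\<exists>x y. ob_regular p' v' x \<and> ob_regular p' v' y \<and> ob_code p' v' n x = w \<and> ob_code p' v' n y = w
      \<and> ob_index p' v' ((ob_map p' v' ^^ n) x) \<noteq> ob_index p' v' ((ob_map p' v' ^^ n) y))"

lemma split_count:
  assumes n: "n \<ge> 1"
  shows "card {w \<in> Wc p v n. spl p v n w} \<le> p * (p * p * 2 * (8 * n + 1) ^ p + 1)"
proof -
  have sub: "{w \<in> Wc p v n. spl p v n w} \<subseteq> (\<Union>j\<in>{..<p}. {w \<in> Wc p v n. Iw p v j w \<noteq> {}})"
  proof
    fix w assume w: "w \<in> {w \<in> Wc p v n. spl p v n w}"
    then obtain x y where xy: "ob_regular p v x" "ob_regular p v y" "ob_code p v n x = w" "ob_code p v n y = w"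
      "ob_index p v ((ob_map p v ^^ n) x) \<noteq> ob_index p v ((ob_map p v ^^ n) y)" unfolding spl_def by blast
    obtain j t where "j < p" "t \<ge> 0" "inV p v w (v j + t *\<^sub>R (v j - v (Suc j mod p)))"
      using ray_meet[OF n xy] by blast
    then have "j < p" "t \<in> Iw p v j w" unfolding Iw_def Rr_def by auto
    then show "w \<in> (\<Union>j\<in>{..<p}. {w \<in> Wc p v n. Iw p v j w \<noteq> {}})" using w by blast
  qed
  have "card {w \<in> Wc p v n. spl p v n w} \<le> card (\<Union>j\<in>{..<p}. {w \<in> Wc p v n. Iw p v j w \<noteq> {}})"
    by (rule card_mono[OF _ sub]) (auto intro: finite_subset[OF _ Wc_finite])
  also have "\<dots> \<le> (\<Sum>j<p. card {w \<in> Wc p v n. Iw p v j w \<noteq> {}})" by (rule card_UN_le) simp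
  also have "\<dots> \<le> (\<Sum>j<p. p * p * 2 * (8 * n + 1) ^ p + 1)"
  proof (rule sum_mono)
    fix j assume "j \<in> {..<p}"
    then have "card {w \<in> Wc p v n. Iw p v j w \<noteq> {}} \<le> card (Roots p v j n) + 1" using ray_count by simp
    then show "card {w \<in> Wc p v n. Iw p v j w \<noteq> {}} \<le> p * p * 2 * (8 * n + 1) ^ p + 1"
      using Roots_card[of j n] by linarith
  qed
  also have "\<dots> = p * (p * p * 2 * (8 * n + 1) ^ p + 1)" by simp
  finally show ?thesis .
qed

lemma step_bound: "card (Wc p v (Suc n)) \<le> card (Wc p v n) + (p - 1) * card {w \<in> Wc p v n. spl p v n w}"
proof -
  define G where "G w = {l \<in> Wc p v (Suc n). take n l = w}" for w
  have sub: "Wc p v (Suc n) \<subseteq> (\<Union>w\<in>Wc p v n. G w)"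
  proof
    fix l assume l: "l \<in> Wc p v (Suc n)"
    then have "take n l \<in> Wc p v n" using Wc_take[of n] by blast
    then show "l \<in> (\<Union>w\<in>Wc p v n. G w)" using l unfolding G_def by blast
  qed
  have finG: "finite (G w)" for w unfolding G_def using Wc_finite by simp
  have Gp: "card (G w) \<le> p" for w
  proof -
    have "G w \<subseteq> (\<lambda>a. w @ [a]) ` {..<p}"
    proof
      fix l assume "l \<in> G w"
      then have l: "l \<in> Wc p v (Suc n)" "take n l = w" unfolding G_def by auto
      then obtain x where x: "ob_regular p v x" "l = ob_code p v (Suc n) x" by (auto elim: Wc_E)
      have "ob_code p v n x = w" using l(2) x(2) code_take by simp
      moreover have "ob_index p v ((ob_map p v ^^ n) x) < p" using regular_orbit[OF x(1)] by blast
      ultimately show "l \<in> (\<lambda>a. w @ [a]) ` {..<p}" using x(2) code_Suc by auto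
    qed
    then have "card (G w) \<le> card ((\<lambda>a. w @ [a]) ` {..<p})" by (rule card_mono[rotated]) simp
    also have "\<dots> \<le> p" using card_image_le[of "{..<p}" "\<lambda>a. w @ [a]"] by simp
    finally show ?thesis .
  qed
  have G1: "card (G w) \<le> 1" if ns: "\<not> spl p v n w" for w
  proof -
    have "\<forall>l1\<in>G w. \<forall>l2\<in>G w. l1 = l2"
    proof (intro ballI)
      fix l1 l2 assume "l1 \<in> G w" "l2 \<in> G w"
      then have l: "l1 \<in> Wc p v (Suc n)" "take n l1 = w" "l2 \<in> Wc p v (Suc n)" "take n l2 = w" unfolding G_def by auto
      obtain x where x: "ob_regular p v x" "l1 = ob_code p v (Suc n) x" using l(1) by (auto elim: Wc_E)
      obtain y where y: "ob_regular p v y" "l2 = ob_code p v (Suc n) y" using l(3) by (auto elim: Wc_E)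
      have cx: "ob_code p v n x = w" using l(2) x(2) code_take by simp
      have cy: "ob_code p v n y = w" using l(4) y(2) code_take by simp
      have "ob_index p v ((ob_map p v ^^ n) x) = ob_index p v ((ob_map p v ^^ n) y)"
        using ns x(1) y(1) cx cy unfolding spl_def by blast
      then show "l1 = l2" using x(2) y(2) cx cy code_Suc by simp
    qed
    then show ?thesis using card_le_Suc0_iff_eq[OF finG] by simp
  qed
  have "card (Wc p v (Suc n)) \<le> card (\<Union>w\<in>Wc p v n. G w)"
    by (rule card_mono[OF _ sub]) (use Wc_finite finG in auto)
  also have "\<dots> \<le> (\<Sum>w\<in>Wc p v n. card (G w))" by (rule card_UN_le[OF Wc_finite])
  also have "\<dots> \<le> (\<Sum>w\<in>Wc p v n. 1 + (if spl p v n w then p - 1 else 0))"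
  proof (rule sum_mono)
    fix w assume "w \<in> Wc p v n"
    show "card (G w) \<le> 1 + (if spl p v n w then p - 1 else 0)"
      using Gp[of w] G1[of w] p3 by (cases "spl p v n w") auto
  qed
  also have "\<dots> = card (Wc p v n) + (\<Sum>w\<in>Wc p v n. if spl p v n w then p - 1 else 0)"
    unfolding sum.distrib by simp
  also have "(\<Sum>w\<in>Wc p v n. if spl p v n w then p - 1 else 0) = (\<Sum>w\<in>{w \<in> Wc p v n. spl p v n w}. p - 1)"
    by (rule sum.inter_filter[OF Wc_finite, symmetric])
  also have "\<dots> = (p - 1) * card {w \<in> Wc p v n. spl p v n w}" by simp
  finally show ?thesis .
qed

lemma Wc1: "card (Wc p v 1) \<le> p"
proof -
  have "Wc p v 1 \<subseteq> (\<lambda>a. [a]) ` {..<p}"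
  proof
    fix l assume "l \<in> Wc p v 1"
    then obtain x where x: "ob_regular p v x" "l = ob_code p v 1 x" by (auto elim: Wc_E)
    then have "ob_index p v ((ob_map p v ^^ 0) x) < p" using regular_orbit[OF x(1)] by blast
    then show "l \<in> (\<lambda>a. [a]) ` {..<p}" using x(2) by (simp add: ob_code_def)
  qed
  then have "card (Wc p v 1) \<le> card ((\<lambda>a. [a]) ` {..<p})" by (rule card_mono[rotated]) simp
  also have "\<dots> \<le> p" using card_image_le[of "{..<p}" "\<lambda>a. [a]"] by simp
  finally show ?thesis .
qed

definition KK :: "nat \<Rightarrow> nat" where "KK p' = p' * p' * (2 * p' * p' + 1)"

lemma incr_bound:
  assumes n: "n \<ge> 1"
  shows "(p - 1) * (p * (p * p * 2 * (8 * n + 1) ^ p + 1)) \<le> KK p * (9 * n) ^ p"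
proof -
  have X1: "1 \<le> (8 * n + 1) ^ p" by simp
  have "(p - 1) * (p * (p * p * 2 * (8 * n + 1) ^ p + 1)) \<le> p * (p * (p * p * 2 * (8 * n + 1) ^ p + 1))"
    by (intro mult_le_mono1) simp
  also have "p * p * 2 * (8 * n + 1) ^ p + 1 \<le> p * p * 2 * (8 * n + 1) ^ p + (8 * n + 1) ^ p" using X1 by simp
  also have "p * (p * p * 2 * (8 * n + 1) ^ p + (8 * n + 1) ^ p) = p * (2 * p * p + 1) * (8 * n + 1) ^ p"
    by (simp add: algebra_simps)
  also have "(8 * n + 1) ^ p \<le> (9 * n) ^ p" using n by (intro power_mono) auto
  finally have "(p - 1) * (p * (p * p * 2 * (8 * n + 1) ^ p + 1)) \<le> p * (p * (2 * p * p + 1) * (9 * n) ^ p)"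
    by simp
  also have "\<dots> = KK p * (9 * n) ^ p" unfolding KK_def by (simp add: algebra_simps)
  finally show ?thesis .
qed

lemma upper_nat: "card (Wc p v (Suc n)) \<le> p + Suc n * KK p * (9 * Suc n) ^ p"
proof (induction n)
  case 0 then show ?case using Wc1 by simp
next
  case (Suc n)
  have "card (Wc p v (Suc (Suc n))) \<le> card (Wc p v (Suc n)) + (p - 1) * card {w \<in> Wc p v (Suc n). spl p v (Suc n) w}"
    by (rule step_bound)
  also have "(p - 1) * card {w \<in> Wc p v (Suc n). spl p v (Suc n) w} \<le> (p - 1) * (p * (p * p * 2 * (8 * Suc n + 1) ^ p + 1))"
    by (intro mult_le_mono2 split_count) simp
  also have "\<dots> \<le> KK p * (9 * Suc n) ^ p" by (rule incr_bound) simp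
  finally have "card (Wc p v (Suc (Suc n))) \<le> p + Suc n * KK p * (9 * Suc n) ^ p + KK p * (9 * Suc n) ^ p"
    using Suc.IH by linarith
  also have "\<dots> = p + Suc (Suc n) * KK p * (9 * Suc n) ^ p" by (simp add: algebra_simps)
  also have "(9 * Suc n) ^ p \<le> (9 * Suc (Suc n)) ^ p" by (intro power_mono) auto
  finally show ?case by simp
qed

lemma upper_final:
  assumes n: "n \<ge> 1"
  shows "card (Wc p v n) \<le> (p + KK p * 9 ^ p) * n ^ (p + 1)"
proof -
  obtain m where m: "n = Suc m" using n by (cases n) auto
  have A: "card (Wc p v n) \<le> p + n * KK p * (9 * n) ^ p" using upper_nat[of m] m by simp
  have E: "n * KK p * (9 * n) ^ p = KK p * 9 ^ p * n ^ (p + 1)" by (simp add: power_mult_distrib algebra_simps)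
  have B: "p \<le> p * n ^ (p + 1)" using n by simp
  have "card (Wc p v n) \<le> p * n ^ (p + 1) + KK p * 9 ^ p * n ^ (p + 1)" using A E B by linarith
  also have "\<dots> = (p + KK p * 9 ^ p) * n ^ (p + 1)" by (simp add: algebra_simps)
  finally show ?thesis .
qed

end

theorem mainTheorem4:
  fixes p :: nat and v :: "nat \<Rightarrow> real \<times> real"
  assumes "convex_polygon p v"
  shows "(\<exists>C. \<forall>\<^sub>F n in sequentially. real n \<le> C * real (ob_complexity p v n))
       \<and> (\<exists>C. \<forall>\<^sub>F n in sequentially. real (ob_complexity p v n) \<le> C * real n ^ (p + 1))"
proof
  show "\<exists>C. \<forall>\<^sub>F n in sequentially. real n \<le> C * real (ob_complexity p v n)"
  proof (intro exI[of _ 1] always_eventually allI)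
    fix n
    show "real n \<le> 1 * real (ob_complexity p v n)"
      using lower_lin[OF assms, of n] Wc_card[OF assms, of n] by simp
  qed
next
  show "\<exists>C. \<forall>\<^sub>F n in sequentially. real (ob_complexity p v n) \<le> C * real n ^ (p + 1)"
  proof (intro exI[of _ "real (p + KK p * 9 ^ p)"])
    show "\<forall>\<^sub>F n in sequentially. real (ob_complexity p v n) \<le> real (p + KK p * 9 ^ p) * real n ^ (p + 1)"
      unfolding eventually_sequentially
    proof (intro exI[of _ 1] allI impI)
      fix n :: nat assume n: "1 \<le> n"
      have "ob_complexity p v n \<le> (p + KK p * 9 ^ p) * n ^ (p + 1)"
        using upper_final[OF assms n] Wc_card[OF assms, of n] by simp
      then have "real (ob_complexity p v n) \<le> real ((p + KK p * 9 ^ p) * n ^ (p + 1))" by (rule of_nat_mono)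
      then show "real (ob_complexity p v n) \<le> real (p + KK p * 9 ^ p) * real n ^ (p + 1)" by simp
    qed
  qed
qed

end
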